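(* Let $f:\mathbb{R}\to\mathbb{R}$ satisfy assumptions (A1) and (A2) below, and consider the Cauchy problem $\dot x=f(x)$, $x(0)=x_0$. Then: (i) for every $x_0\in\mathbb{R}$ there exists at least one Carathéodory solution, defined for all times $t\geq 0$; (ii) every Carathéodory solution is monotone (either nondecreasing or nonincreasing); (iii) for each $x_0$, the set of all Carathéodory solutions is nonempty and closed with respect to the topology of uniform convergence on bounded subsets of $[0,+\infty[$.
   Context: (A1): $f$ is bounded and regulated, i.e. it admits left and right limits $f(x-)$, $f(x+)$ at every point $x\in\mathbb{R}$. (A2): if $y$ is a point where either $f(y-)\cdot f(y+)=0$ or $f(y-)>0>f(y+)$, then $f(y)=0$. A Carathéodory solution of the Cauchy problem $\dot x=f(x)$, $x(0)=x_0$ is a function $t\mapsto x(t)$ on $[0,+\infty[$ (or on an interval $[0,\tau]$ when stated) satisfying $x(t)=x_0+\int_0^t f(x(s))\,ds$ for all $t$ in its domain. *)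

theory Defs
  imports "HOL-Analysis.Analysis"
begin

definition regulated :: "(real \<Rightarrow> real) \<Rightarrow> bool" where
  "regulated f \<longleftrightarrow>
     (\<forall>x. (\<exists>l. (f \<longlongrightarrow> l) (at_left x)) \<and> (\<exists>r. (f \<longlongrightarrow> r) (at_right x)))"

definition left_lim :: "(real \<Rightarrow> real) \<Rightarrow> real \<Rightarrow> real" where
  "left_lim f y = Lim (at_left y) f"

definition right_lim :: "(real \<Rightarrow> real) \<Rightarrow> real \<Rightarrow> real" where
  "right_lim f y = Lim (at_right y) f"

definition A1 :: "(real \<Rightarrow> real) \<Rightarrow> bool" where
  "A1 f \<longleftrightarrow> bounded (range f) \<and> regulated f"

definition A2 :: "(real \<Rightarrow> real) \<Rightarrow> bool" where
  "A2 f \<longleftrightarrow> (\<forall>y. (left_lim f y * right_lim f y = 0 \<or> (left_lim f y > 0 \<and> 0 > right_lim f y))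
                  \<longrightarrow> f y = 0)"

definition caratheodory_solution_on ::
  "(real \<Rightarrow> real) \<Rightarrow> real \<Rightarrow> real set \<Rightarrow> (real \<Rightarrow> real) \<Rightarrow> bool" where
  "caratheodory_solution_on f x0 I x \<longleftrightarrow>
     (\<forall>t\<in>I. ((\<lambda>s. f (x s)) has_integral (x t - x0)) {0..t})"

end

theory Submission
  imports Defs
begin

lemma reg_lims:
  assumes "regulated f"
  shows "(f \<longlongrightarrow> left_lim f y) (at_left y)" "(f \<longlongrightarrow> right_lim f y) (at_right y)"
proof -
  obtain l r where "(f \<longlongrightarrow> l) (at_left y)" "(f \<longlongrightarrow> r) (at_right y)"
    using assms unfolding regulated_def by blast
  then show "(f \<longlongrightarrow> left_lim f y) (at_left y)" "(f \<longlongrightarrow> right_lim f y) (at_right y)"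
    unfolding left_lim_def right_lim_def
    using tendsto_Lim[OF trivial_limit_at_left_real] tendsto_Lim[OF trivial_limit_at_right_real] by blast+
qed

definition tset :: "real set \<Rightarrow> bool" where
  "tset I \<longleftrightarrow> (\<forall>t\<in>I. 0 \<le> t \<and> {0..t} \<subseteq> I)"

lemma tset_simps: "tset {0..}" "0 \<le> \<tau> \<Longrightarrow> tset {0..\<tau>}"
  unfolding tset_def by auto

lemma sol_incr:
  assumes sol: "caratheodory_solution_on f x0 I x" and I: "tset I"
    and ab: "a \<in> I" "b \<in> I" "a \<le> b"
  shows "((\<lambda>s. f (x s)) has_integral (x b - x a)) {a..b}"
proof -
  have 0: "0 \<le> a" using assms unfolding tset_def by auto
  have ha: "((\<lambda>s. f (x s)) has_integral (x a - x0)) {0..a}"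
    and hb: "((\<lambda>s. f (x s)) has_integral (x b - x0)) {0..b}"
    using sol ab unfolding caratheodory_solution_on_def by auto
  have "(\<lambda>s. f (x s)) integrable_on {a..b}"
    using integrable_subinterval_real[OF has_integral_integrable[OF hb]] 0 by auto
  then obtain J where hJ: "((\<lambda>s. f (x s)) has_integral J) {a..b}" by blast
  have "((\<lambda>s. f (x s)) has_integral (x a - x0 + J)) {0..b}"
    using has_integral_combine[OF 0 \<open>a \<le> b\<close> ha hJ] .
  then have "x a - x0 + J = x b - x0" using hb has_integral_unique by blast
  then have "J = x b - x a" by linarith
  then show ?thesis using hJ by simp
qed

lemma sol_lip:
  assumes sol: "caratheodory_solution_on f x0 I x" and I: "tset I"
    and ab: "a \<in> I" "b \<in> I" and B: "\<And>z. \<bar>f z\<bar> \<le> B"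
  shows "\<bar>x b - x a\<bar> \<le> B * \<bar>b - a\<bar>"
proof -
  have B0: "0 \<le> B" using B[of 0] by linarith
  have *: "\<bar>x v - x u\<bar> \<le> B * (v - u)" if "u \<in> I" "v \<in> I" "u \<le> v" for u v
    using has_integral_bound_real[OF B0 finite.emptyI sol_incr[OF sol I that]] B that by auto
  show ?thesis
  proof (cases "a \<le> b")
    case True then show ?thesis using *[OF ab True] by auto
  next
    case False then show ?thesis using *[OF ab(2,1)] by (auto simp: abs_minus_commute)
  qed
qed

lemma lip_cont:
  assumes "\<And>a b. a \<in> S \<Longrightarrow> b \<in> S \<Longrightarrow> \<bar>x b - x a\<bar> \<le> B * \<bar>b - a\<bar>"
  shows "continuous_on S (x :: real \<Rightarrow> real)"
  unfolding continuous_on_iff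
proof (intro ballI allI impI)
  fix a e assume a: "a \<in> S" and e: "(0::real) < e"
  have B0: "0 \<le> B \<or> True" by simp
  show "\<exists>d>0. \<forall>b\<in>S. dist b a < d \<longrightarrow> dist (x b) (x a) < e"
  proof (rule exI[of _ "e / (\<bar>B\<bar> + 1)"], intro conjI ballI impI)
    show "0 < e / (\<bar>B\<bar> + 1)" using e by auto
  next
    fix b assume b: "b \<in> S" and d: "dist b a < e / (\<bar>B\<bar> + 1)"
    have "\<bar>x b - x a\<bar> \<le> B * \<bar>b - a\<bar>" using assms a b by auto
    also have "\<dots> \<le> \<bar>B\<bar> * \<bar>b - a\<bar>" by (simp add: mult_right_mono)
    also have "\<dots> \<le> (\<bar>B\<bar> + 1) * \<bar>b - a\<bar>" by (simp add: mult_right_mono)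
    also have "\<dots> < e" using d by (simp add: dist_real_def field_simps)
    finally show "dist (x b) (x a) < e" by (simp add: dist_real_def)
  qed
qed

lemma sol_cont:
  assumes sol: "caratheodory_solution_on f x0 I x" and I: "tset I"
    and B: "\<And>z. \<bar>f z\<bar> \<le> B"
  shows "continuous_on I x"
  by (rule lip_cont[of I x B]) (use sol_lip[OF sol I _ _ B] in auto)

lemma crossing:
  fixes g :: "real \<Rightarrow> real"
  assumes cg: "continuous_on {a..b} g" and ab: "a \<le> b" and p: "g a \<le> p" "p < q" "q \<le> g b"
  shows "\<exists>s r. a \<le> s \<and> s < r \<and> r \<le> b \<and> g s = p \<and> g r = q \<and>
           (\<forall>u. s < u \<and> u < r \<longrightarrow> p < g u \<and> g u < q)"
proof -
  define A where "A = {a..b} \<inter> g -` {q..}"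
  have clA: "closed A" unfolding A_def by (rule continuous_closed_preimage[OF cg]) auto
  have bA: "b \<in> A" using p ab by (auto simp: A_def)
  have bdA: "bdd_below A" unfolding A_def by (auto intro: bdd_belowI[of _ a])
  define r where "r = Inf A"
  have rA: "r \<in> A" unfolding r_def using closed_contains_Inf[OF _ bdA clA] bA by auto
  have ltq: "g u < q" if "a \<le> u" "u < r" for u
  proof (rule ccontr)
    assume "\<not> g u < q"
    then have "u \<in> A" using that rA by (auto simp: A_def)
    then have "r \<le> u" unfolding r_def using bdA by (simp add: cInf_lower)
    then show False using that by auto
  qed
  have ar: "a < r" using rA p by (cases "a = r") (auto simp: A_def)
  have grq: "g r = q"
  proof (rule ccontr)
    assume "g r \<noteq> q"
    then have gt: "g r > q" using rA by (auto simp: A_def)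
    obtain d where d: "d > 0" "\<forall>u\<in>{a..b}. dist u r < d \<longrightarrow> dist (g u) (g r) < g r - q"
      using cg rA gt unfolding continuous_on_iff A_def by (meson IntD1 diff_gt_0_iff_gt)
    define u where "u = max a (r - d/2)"
    have u: "a \<le> u" "u < r" "u \<in> {a..b}" "dist u r < d" using ar d rA
      by (auto simp: u_def dist_real_def A_def)
    then have "g u > q" using d(2)[rule_format, OF u(3) u(4)] by (auto simp: dist_real_def)
    then show False using ltq u by force
  qed
  define C where "C = {a..r} \<inter> g -` {..p}"
  have cg2: "continuous_on {a..r} g" by (rule continuous_on_subset[OF cg]) (use rA in \<open>auto simp: A_def\<close>)
  have clC: "closed C" unfolding C_def by (rule continuous_closed_preimage[OF cg2]) auto
  have aC: "a \<in> C" using p ar by (auto simp: C_def)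
  have bdC: "bdd_above C" unfolding C_def by (auto intro: bdd_aboveI[of _ r])
  define s where "s = Sup C"
  have sC: "s \<in> C" unfolding s_def using closed_contains_Sup[OF _ bdC clC] aC by auto
  have gtp: "g u > p" if "s < u" "u \<le> r" for u
  proof (rule ccontr)
    assume "\<not> g u > p"
    then have "u \<in> C" using that sC by (auto simp: C_def)
    then have "u \<le> s" unfolding s_def using bdC by (simp add: cSup_upper)
    then show False using that by auto
  qed
  have sr: "s < r" using sC grq p by (cases "s = r") (auto simp: C_def)
  have gsp: "g s = p"
  proof (rule ccontr)
    assume "g s \<noteq> p"
    then have lt: "g s < p" using sC by (auto simp: C_def)
    obtain d where d: "d > 0" "\<forall>u\<in>{a..r}. dist u s < d \<longrightarrow> dist (g u) (g s) < p - g s"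
      using cg2 sC lt unfolding continuous_on_iff C_def by (meson IntD1 diff_gt_0_iff_gt)
    define u where "u = min r (s + d/2)"
    have u: "s < u" "u \<le> r" "u \<in> {a..r}" "dist u s < d" using sr d sC
      by (auto simp: u_def dist_real_def C_def)
    then have "g u < p" using d(2)[rule_format, OF u(3) u(4)] by (auto simp: dist_real_def)
    then show False using gtp u by force
  qed
  show ?thesis
    apply (rule exI[of _ s], rule exI[of _ r])
    using sC rA sr grq gsp gtp ltq by (auto simp: C_def A_def)
qed

lemma int_nonpos_open:
  fixes g :: "real \<Rightarrow> real"
  assumes "(g has_integral J) {a..b}" "\<And>u. a < u \<Longrightarrow> u < b \<Longrightarrow> g u \<le> 0"
  shows "J \<le> 0"
proof -
  let ?h = "\<lambda>u. if a < u \<and> u < b then g u else 0"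
  have "(?h has_integral J) {a..b}"
    by (rule has_integral_spike_finite[where S="{a,b}" and f=g]) (use assms in auto)
  then show ?thesis
    using has_integral_le[of ?h J "{a..b}" "\<lambda>_. 0" 0] assms(2) by auto
qed

lemma int_nonneg_open:
  fixes g :: "real \<Rightarrow> real"
  assumes "(g has_integral J) {a..b}" "\<And>u. a < u \<Longrightarrow> u < b \<Longrightarrow> g u \<ge> 0"
  shows "J \<ge> 0"
proof -
  let ?h = "\<lambda>u. if a < u \<and> u < b then g u else 0"
  have "(?h has_integral J) {a..b}"
    by (rule has_integral_spike_finite[where S="{a,b}" and f=g]) (use assms in auto)
  then show ?thesis
    using has_integral_le[of "\<lambda>_. 0" 0 "{a..b}" ?h J] assms(2) by auto
qed

lemma no_peak_mono:
  fixes x :: "real \<Rightarrow> real"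
  assumes np: "\<And>a b c. a \<in> I \<Longrightarrow> b \<in> I \<Longrightarrow> c \<in> I \<Longrightarrow> a < b \<Longrightarrow> b < c \<Longrightarrow>
      \<not> (x a < x b \<and> x c < x b) \<and> \<not> (x a > x b \<and> x c > x b)"
  shows "mono_on I x \<or> antimono_on I x"
proof (rule ccontr)
  assume "\<not> (mono_on I x \<or> antimono_on I x)"
  then obtain u v u' v' where uv: "u \<in> I" "v \<in> I" "u \<le> v" "x u > x v"
    and uv': "u' \<in> I" "v' \<in> I" "u' \<le> v'" "x u' < x v'"
    unfolding monotone_on_def by (auto simp: not_le)
  show False
    using np[of u v u'] np[of u v v'] np[of u u' v] np[of u v' v] np[of u' u v] np[of v' u v]
      np[of u' v' u] np[of u' v' v] np[of u' u v'] np[of u' v v'] np[of u u' v'] np[of v u' v']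
      np[of u u' v] np[of u' u v] np[of v' u v] np[of u v' v] np[of v u' v'] np[of u' v v'] 
      uv uv'
    by (smt (verit))
qed

lemma tset_sub: "tset I \<Longrightarrow> a \<in> I \<Longrightarrow> b \<in> I \<Longrightarrow> {a..b} \<subseteq> I"
proof
  fix u assume "tset I" "a \<in> I" "b \<in> I" "u \<in> {a..b}"
  then have "0 \<le> a" "{0..b} \<subseteq> I" unfolding tset_def by auto
  then show "u \<in> I" using \<open>u \<in> {a..b}\<close> by auto
qed

lemma core_up:
  assumes sol: "caratheodory_solution_on f x0 I x" and I: "tset I" and B: "\<And>z. \<bar>f z\<bar> \<le> B"
    and ab: "a \<in> I" "b \<in> I" "a \<le> b" and pq: "x a \<le> p" "p < q" "q \<le> x b"
    and neg: "\<And>z. p < z \<Longrightarrow> z < q \<Longrightarrow> f z \<le> 0"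
  shows False
proof -
  have sub: "{a..b} \<subseteq> I" using tset_sub[OF I ab(1,2)] .
  have cx: "continuous_on {a..b} x" using sol_cont[OF sol I B] sub by (rule continuous_on_subset)
  obtain s r where sr: "a \<le> s" "s < r" "r \<le> b" "x s = p" "x r = q"
      "\<And>u. s < u \<Longrightarrow> u < r \<Longrightarrow> p < x u \<and> x u < q"
    using crossing[OF cx ab(3) pq] by blast
  have sI: "s \<in> I" "r \<in> I" using sub sr by auto
  have int: "((\<lambda>u. f (x u)) has_integral (x r - x s)) {s..r}"
    using sol_incr[OF sol I sI] sr by simp
  have "x r - x s \<le> 0" by (rule int_nonpos_open[OF int]) (use sr neg in auto)
  then show False using sr pq by simp
qed

lemma core_down:
  assumes sol: "caratheodory_solution_on f x0 I x" and I: "tset I" and B: "\<And>z. \<bar>f z\<bar> \<le> B"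
    and ab: "a \<in> I" "b \<in> I" "a \<le> b" and pq: "x a \<ge> q" "p < q" "p \<ge> x b"
    and pos: "\<And>z. p < z \<Longrightarrow> z < q \<Longrightarrow> f z \<ge> 0"
  shows False
proof -
  have sub: "{a..b} \<subseteq> I" using tset_sub[OF I ab(1,2)] .
  have cx: "continuous_on {a..b} (\<lambda>u. - x u)"
    using sol_cont[OF sol I B] sub by (intro continuous_intros) (rule continuous_on_subset)
  obtain s r where sr: "a \<le> s" "s < r" "r \<le> b" "- x s = - q" "- x r = - p"
      "\<And>u. s < u \<Longrightarrow> u < r \<Longrightarrow> - q < - x u \<and> - x u < - p"
    using crossing[OF cx ab(3), of "-q" "-p"] pq by auto
  have sI: "s \<in> I" "r \<in> I" using sub sr by auto
  have int: "((\<lambda>u. f (x u)) has_integral (x r - x s)) {s..r}"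
    using sol_incr[OF sol I sI] sr by simp
  have "x r - x s \<ge> 0" by (rule int_nonneg_open[OF int]) (use sr pos in force)
  then show False using sr pq by simp
qed

lemma right_event:
  fixes f :: "real \<Rightarrow> real"
  assumes "(f \<longlongrightarrow> l) (at_right (y::real))" "l < 0"
  shows "\<exists>c>y. \<forall>z. y < z \<and> z < c \<longrightarrow> f z < 0"
proof -
  have "eventually (\<lambda>z. f z < 0) (at_right y)" using order_tendstoD(2)[OF assms] .
  then show ?thesis unfolding eventually_at_right_field by auto
qed

lemma right_event_pos:
  fixes f :: "real \<Rightarrow> real"
  assumes "(f \<longlongrightarrow> l) (at_right (y::real))" "l > 0"
  shows "\<exists>c>y. \<forall>z. y < z \<and> z < c \<longrightarrow> f z > 0"
proof -
  have "eventually (\<lambda>z. f z > 0) (at_right y)" using order_tendstoD(1)[OF assms] .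
  then show ?thesis unfolding eventually_at_right_field by auto
qed

lemma up_R:
  assumes reg: "regulated f" and sol: "caratheodory_solution_on f x0 I x" and I: "tset I"
    and B: "\<And>z. \<bar>f z\<bar> \<le> B"
    and ab: "a \<in> I" "b \<in> I" "a \<le> b" and y: "x a < y" "y < x b"
  shows "right_lim f y \<ge> 0"
proof (rule ccontr)
  assume "\<not> right_lim f y \<ge> 0"
  then have "right_lim f y < 0" by simp
  then obtain c where c: "c > y" "\<And>z. y < z \<Longrightarrow> z < c \<Longrightarrow> f z < 0"
    using right_event[OF reg_lims(2)[OF reg]] by blast
  show False
  proof (rule core_up[OF sol I B ab, of y "min c (x b)"])
    show "x a \<le> y" using y by simp
    show "y < min c (x b)" using y c by simp
    show "min c (x b) \<le> x b" by simp
    fix z assume "y < z" "z < min c (x b)" then show "f z \<le> 0" using c(2)[of z] by simp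
  qed
qed

lemma down_R:
  assumes reg: "regulated f" and sol: "caratheodory_solution_on f x0 I x" and I: "tset I"
    and B: "\<And>z. \<bar>f z\<bar> \<le> B"
    and ab: "a \<in> I" "b \<in> I" "a \<le> b" and y: "x a > y" "y > x b"
  shows "right_lim f y \<le> 0"
proof (rule ccontr)
  assume "\<not> right_lim f y \<le> 0"
  then have "right_lim f y > 0" by simp
  then obtain c where c: "c > y" "\<And>z. y < z \<Longrightarrow> z < c \<Longrightarrow> f z > 0"
    using right_event_pos[OF reg_lims(2)[OF reg]] by blast
  show False
  proof (rule core_down[OF sol I B ab, of "min c (x a)" y])
    show "x b \<le> y" using y by simp
    show "y < min c (x a)" using y c by simp
    show "min c (x a) \<le> x a" by simp
    fix z assume "y < z" "z < min c (x a)" then show "f z \<ge> 0" using c(2)[of z] by simp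
  qed
qed

lemma A1_bound: "A1 f \<Longrightarrow> \<exists>B. \<forall>z. \<bar>f z\<bar> \<le> B"
  unfolding A1_def bounded_iff by auto

lemma A1_reg: "A1 f \<Longrightarrow> regulated f"
  unfolding A1_def by auto

lemma sol_mono:
  assumes a1: "A1 f" and a2: "A2 f" and sol: "caratheodory_solution_on f x0 I x" and I: "tset I"
  shows "mono_on I x \<or> antimono_on I x"
proof -
  obtain B where B: "\<And>z. \<bar>f z\<bar> \<le> B" using A1_bound[OF a1] by blast
  have reg: "regulated f" using A1_reg[OF a1] .
  have R0: "f y = 0" if "right_lim f y = 0" for y
    using a2 that unfolding A2_def by auto
  show ?thesis
  proof (rule no_peak_mono)
    fix a b c assume abc: "a \<in> I" "b \<in> I" "c \<in> I" "a < b" "b < c"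
    show "\<not> (x a < x b \<and> x c < x b) \<and> \<not> (x a > x b \<and> x c > x b)"
    proof (intro conjI notI)
      assume h: "x a < x b \<and> x c < x b"
      define lo where "lo = max (x a) (x c)"
      have z: "f y = 0" if "lo < y" "y < x b" for y
      proof -
        have "right_lim f y \<ge> 0"
          by (rule up_R[OF reg sol I B abc(1,2)]) (use abc that in \<open>auto simp: lo_def\<close>)
        moreover have "right_lim f y \<le> 0"
          by (rule down_R[OF reg sol I B abc(2,3)]) (use abc that in \<open>auto simp: lo_def\<close>)
        ultimately show ?thesis using R0 by auto
      qed
      show False
        by (rule core_up[OF sol I B abc(1,2), of lo "x b"]) (use abc h z in \<open>auto simp: lo_def\<close>)
    next
      assume h: "x a > x b \<and> x c > x b"
      define hi where "hi = min (x a) (x c)"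
      have z: "f y = 0" if "x b < y" "y < hi" for y
      proof -
        have "right_lim f y \<le> 0"
          by (rule down_R[OF reg sol I B abc(1,2)]) (use abc that in \<open>auto simp: hi_def\<close>)
        moreover have "right_lim f y \<ge> 0"
          by (rule up_R[OF reg sol I B abc(2,3)]) (use abc that in \<open>auto simp: hi_def\<close>)
        ultimately show ?thesis using R0 by auto
      qed
      show False
        by (rule core_up[OF sol I B abc(2,3), of "x b" hi]) (use abc h z in \<open>auto simp: hi_def\<close>)
    qed
  qed
qed

lemma lim_band:
  fixes f :: "real \<Rightarrow> real"
  assumes "(f \<longlongrightarrow> l) F" "F \<noteq> bot" "eventually (\<lambda>v. \<bar>f v - c\<bar> < e) F"
  shows "\<bar>l - c\<bar> \<le> e"
proof -
  have "l \<le> c + e"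
    by (rule tendsto_upperbound[OF assms(1) _ assms(2)]) (use assms(3) in \<open>auto elim: eventually_mono\<close>)
  moreover have "c - e \<le> l"
    by (rule tendsto_lowerbound[OF assms(1) _ assms(2)]) (use assms(3) in \<open>auto elim: eventually_mono\<close>)
  ultimately show ?thesis by auto
qed

lemma near_right:
  fixes f :: "real \<Rightarrow> real"
  assumes reg: "regulated f" and e: "e > 0"
  shows "\<exists>b>z. \<forall>w. z < w \<and> w < b \<longrightarrow> \<bar>f w - left_lim f w\<bar> \<le> e \<and> \<bar>f w - right_lim f w\<bar> \<le> e"
proof -
  have "eventually (\<lambda>v. dist (f v) (right_lim f z) < e/2) (at_right z)"
    using tendsto_iff[THEN iffD1, OF reg_lims(2)[OF reg], rule_format, of "e/2"] e by simp
  then obtain b where b: "b > z" "\<And>v. z < v \<Longrightarrow> v < b \<Longrightarrow> \<bar>f v - right_lim f z\<bar> < e/2"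
    unfolding eventually_at_right_field dist_real_def by blast
  show ?thesis
  proof (intro exI[of _ b] conjI allI impI)
    show "z < b" by fact
    fix w assume w: "z < w \<and> w < b"
    have fw: "\<bar>f w - right_lim f z\<bar> < e/2" using b w by auto
    have "\<bar>left_lim f w - right_lim f z\<bar> \<le> e/2"
    proof (rule lim_band[OF reg_lims(1)[OF reg]])
      show "at_left w \<noteq> bot" by simp
      show "\<forall>\<^sub>F v in at_left w. \<bar>f v - right_lim f z\<bar> < e / 2"
        unfolding eventually_at_left_field using w b by (intro exI[of _ z]) auto
    qed
    moreover have "\<bar>right_lim f w - right_lim f z\<bar> \<le> e/2"
    proof (rule lim_band[OF reg_lims(2)[OF reg]])
      show "at_right w \<noteq> bot" by simp
      show "\<forall>\<^sub>F v in at_right w. \<bar>f v - right_lim f z\<bar> < e / 2"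
        unfolding eventually_at_right_field using w b by (intro exI[of _ b]) auto
    qed
    ultimately show "\<bar>f w - left_lim f w\<bar> \<le> e" "\<bar>f w - right_lim f w\<bar> \<le> e"
      using fw by linarith+
  qed
qed

lemma near_left:
  fixes f :: "real \<Rightarrow> real"
  assumes reg: "regulated f" and e: "e > 0"
  shows "\<exists>b<z. \<forall>w. b < w \<and> w < z \<longrightarrow> \<bar>f w - left_lim f w\<bar> \<le> e \<and> \<bar>f w - right_lim f w\<bar> \<le> e"
proof -
  have "eventually (\<lambda>v. dist (f v) (left_lim f z) < e/2) (at_left z)"
    using tendsto_iff[THEN iffD1, OF reg_lims(1)[OF reg], rule_format, of "e/2"] e by simp
  then obtain b where b: "b < z" "\<And>v. b < v \<Longrightarrow> v < z \<Longrightarrow> \<bar>f v - left_lim f z\<bar> < e/2"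
    unfolding eventually_at_left_field dist_real_def by blast
  show ?thesis
  proof (intro exI[of _ b] conjI allI impI)
    show "b < z" by fact
    fix w assume w: "b < w \<and> w < z"
    have fw: "\<bar>f w - left_lim f z\<bar> < e/2" using b w by auto
    have "\<bar>left_lim f w - left_lim f z\<bar> \<le> e/2"
    proof (rule lim_band[OF reg_lims(1)[OF reg]])
      show "at_left w \<noteq> bot" by simp
      show "\<forall>\<^sub>F v in at_left w. \<bar>f v - left_lim f z\<bar> < e / 2"
        unfolding eventually_at_left_field using w b by (intro exI[of _ b]) auto
    qed
    moreover have "\<bar>right_lim f w - left_lim f z\<bar> \<le> e/2"
    proof (rule lim_band[OF reg_lims(2)[OF reg]])
      show "at_right w \<noteq> bot" by simp
      show "\<forall>\<^sub>F v in at_right w. \<bar>f v - left_lim f z\<bar> < e / 2"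
        unfolding eventually_at_right_field using w b by (intro exI[of _ z]) auto
    qed
    ultimately show "\<bar>f w - left_lim f w\<bar> \<le> e" "\<bar>f w - right_lim f w\<bar> \<le> e"
      using fw by linarith+
  qed
qed

lemma cont_if_lims:
  fixes f :: "real \<Rightarrow> real"
  assumes reg: "regulated f" and "left_lim f y = f y" "right_lim f y = f y"
  shows "isCont f y"
  unfolding isCont_def
  using filterlim_split_at_real[of f "nhds (f y)" y] reg_lims[OF reg, of y] assms by auto

lemma reg_countable_disc:
  fixes f :: "real \<Rightarrow> real"
  assumes reg: "regulated f"
  shows "countable {y. \<not> isCont f y}"
proof -
  define D where "D n = {y. \<bar>f y - left_lim f y\<bar> > 1 / Suc n \<or> \<bar>f y - right_lim f y\<bar> > 1 / Suc n}" for n :: nat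
  have fin: "finite (D n \<inter> {- real m..real m})" for n m
  proof (rule ccontr)
    assume inf: "infinite (D n \<inter> {- real m..real m})"
    obtain z where z: "z islimpt (D n \<inter> {- real m..real m})"
      using Heine_Borel_imp_Bolzano_Weierstrass[OF compact_Icc inf] by blast
    have e: "(0::real) < 1 / Suc n" by simp
    obtain b1 where b1: "b1 > z" "\<And>w. z < w \<Longrightarrow> w < b1 \<Longrightarrow> w \<notin> D n"
      using near_right[OF reg e, of z] unfolding D_def by force
    obtain b2 where b2: "b2 < z" "\<And>w. b2 < w \<Longrightarrow> w < z \<Longrightarrow> w \<notin> D n"
      using near_left[OF reg e, of z] unfolding D_def by force
    obtain w where w: "w \<in> D n" "w \<noteq> z" "\<bar>w - z\<bar> < min (b1 - z) (z - b2)"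
      using z b1 b2 unfolding islimpt_approachable_real by (metis IntD1 diff_gt_0_iff_gt min_less_iff_conj)
    show False
    proof (cases "w < z")
      case True then show ?thesis using b2(2)[of w] w by auto
    next
      case False then show ?thesis using b1(2)[of w] w by auto
    qed
  qed
  have sub: "{y. \<not> isCont f y} \<subseteq> (\<Union>n. \<Union>m. D n \<inter> {- real m..real m})"
  proof
    fix y assume "y \<in> {y. \<not> isCont f y}"
    then have nc: "\<not> isCont f y" by simp
    have "\<exists>n. y \<in> D n"
    proof (rule ccontr)
      assume "\<not> (\<exists>n. y \<in> D n)"
      then have h: "\<bar>f y - left_lim f y\<bar> \<le> 1 / Suc n \<and> \<bar>f y - right_lim f y\<bar> \<le> 1 / Suc n" for n
        unfolding D_def by (auto simp: not_less)
      have "left_lim f y = f y"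
      proof (rule ccontr)
        assume "left_lim f y \<noteq> f y"
        then have p: "\<bar>f y - left_lim f y\<bar> > 0" by simp
        obtain n where "1 / Suc n < \<bar>f y - left_lim f y\<bar>"
          using reals_Archimedean[OF p] by (metis inverse_eq_divide)
        then show False using h[of n] by linarith
      qed
      moreover have "right_lim f y = f y"
      proof (rule ccontr)
        assume "right_lim f y \<noteq> f y"
        then have p: "\<bar>f y - right_lim f y\<bar> > 0" by simp
        obtain n where "1 / Suc n < \<bar>f y - right_lim f y\<bar>"
          using reals_Archimedean[OF p] by (metis inverse_eq_divide)
        then show False using h[of n] by linarith
      qed
      ultimately show False using cont_if_lims[OF reg] nc by blast
    qed
    then obtain n where n: "y \<in> D n" by blast
    obtain m where m: "\<bar>y\<bar> \<le> real m" using real_nat_ceiling_ge[of "\<bar>y\<bar>"] by blast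
    have "y \<in> D n \<inter> {- real m..real m}" using n m by auto
    then show "y \<in> (\<Union>n. \<Union>m. D n \<inter> {- real m..real m})" by blast
  qed
  have "countable (\<Union>n. \<Union>m. D n \<inter> {- real m..real m})"
    using fin by (intro countable_UN[OF _ countable_UN]) (auto intro: countable_finite)
  then show ?thesis using sub countable_subset by blast
qed

lemma countable_negligible: "countable (S::real set) \<Longrightarrow> negligible S"
proof -
  assume c: "countable S"
  have "S = \<Union>((\<lambda>x. {x}) ` S)" by auto
  moreover have "negligible (\<Union>((\<lambda>x. {x}) ` S))"
    by (rule negligible_countable_Union) (use c in auto)
  ultimately show ?thesis by simp
qed

lemma sign_incr_ge:
  assumes sol: "caratheodory_solution_on f x0 I X" and I: "tset I"
    and ab: "a \<in> I" "b \<in> I" "a \<le> b" and ge: "\<And>v. v \<in> {a..b} \<Longrightarrow> f (X v) \<ge> c"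
  shows "X b - X a \<ge> c * (b - a)"
proof -
  have hc: "((\<lambda>_. c) has_integral (c * (b - a))) {a..b}"
    using has_integral_const_real[of c a b] ab by (simp add: mult.commute)
  show ?thesis
    by (rule has_integral_le[OF hc sol_incr[OF sol I ab]]) (use ge in auto)
qed

lemma sign_incr_le:
  assumes sol: "caratheodory_solution_on f x0 I X" and I: "tset I"
    and ab: "a \<in> I" "b \<in> I" "a \<le> b" and le: "\<And>v. v \<in> {a..b} \<Longrightarrow> f (X v) \<le> c"
  shows "X b - X a \<le> c * (b - a)"
proof -
  have hc: "((\<lambda>_. c) has_integral (c * (b - a))) {a..b}"
    using has_integral_const_real[of c a b] ab by (simp add: mult.commute)
  show ?thesis
    by (rule has_integral_le[OF sol_incr[OF sol I ab] hc]) (use le in auto)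
qed

lemma trap_core:
  assumes sol: "caratheodory_solution_on f x0 {0..} X" and a: "0 \<le> a" "a \<le> b"
    and inside: "\<And>v. v \<in> {a..b} \<Longrightarrow> p < X v \<and> X v < q"
    and sgn: "(\<forall>z. p < z \<and> z < q \<longrightarrow> f z \<ge> c) \<or> (\<forall>z. p < z \<and> z < q \<longrightarrow> f z \<le> - c)"
    and close: "\<bar>X a - y\<bar> < \<eta>" "\<bar>X b - y\<bar> < \<eta>" and small: "2 * \<eta> < c * (b - a)"
  shows False
proof -
  have I: "tset {0..}" by (rule tset_simps)
  have ab: "a \<in> {0..}" "b \<in> {0..}" using a by auto
  from sgn show False
  proof
    assume h: "\<forall>z. p < z \<and> z < q \<longrightarrow> f z \<ge> c"
    have "X b - X a \<ge> c * (b - a)"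
      by (rule sign_incr_ge[OF sol I ab a(2)]) (use h inside in blast)
    then show False using close small by linarith
  next
    assume h: "\<forall>z. p < z \<and> z < q \<longrightarrow> f z \<le> - c"
    have "X b - X a \<le> (- c) * (b - a)"
      by (rule sign_incr_le[OF sol I ab a(2)]) (use h inside in blast)
    then show False using close small by linarith
  qed
qed

lemma left_sign:
  fixes f :: "real \<Rightarrow> real"
  assumes reg: "regulated f" and ne: "left_lim f y \<noteq> 0"
  shows "\<exists>\<delta>>0. \<exists>c>0. (\<forall>z. y - \<delta> < z \<and> z < y \<longrightarrow> f z \<ge> c) \<or> (\<forall>z. y - \<delta> < z \<and> z < y \<longrightarrow> f z \<le> - c)"
proof -
  define c where "c = \<bar>left_lim f y\<bar> / 2"
  have c: "c > 0" using ne by (simp add: c_def)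
  have "eventually (\<lambda>v. dist (f v) (left_lim f y) < c) (at_left y)"
    using tendsto_iff[THEN iffD1, OF reg_lims(1)[OF reg], rule_format, of c] c by simp
  then obtain b where b: "b < y" "\<And>v. b < v \<Longrightarrow> v < y \<Longrightarrow> \<bar>f v - left_lim f y\<bar> < c"
    unfolding eventually_at_left_field dist_real_def by blast
  have d: "0 < y - b" using b by auto
  have sg: "(\<forall>z. y - (y - b) < z \<and> z < y \<longrightarrow> c \<le> f z) \<or> (\<forall>z. y - (y - b) < z \<and> z < y \<longrightarrow> f z \<le> - c)"
  proof (cases "left_lim f y > 0")
    case True
    have "\<forall>z. y - (y - b) < z \<and> z < y \<longrightarrow> c \<le> f z"
    proof (intro allI impI)
      fix z assume "y - (y - b) < z \<and> z < y"
      then have "\<bar>f z - left_lim f y\<bar> < c" using b(2) by auto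
      then show "c \<le> f z" using True unfolding c_def by arith
    qed
    then show ?thesis by blast
  next
    case False
    have "\<forall>z. y - (y - b) < z \<and> z < y \<longrightarrow> f z \<le> - c"
    proof (intro allI impI)
      fix z assume "y - (y - b) < z \<and> z < y"
      then have "\<bar>f z - left_lim f y\<bar> < c" using b(2) by auto
      then show "f z \<le> - c" using False ne unfolding c_def by arith
    qed
    then show ?thesis by blast
  qed
  show ?thesis using d c sg by blast
qed

lemma right_sign:
  fixes f :: "real \<Rightarrow> real"
  assumes reg: "regulated f" and ne: "right_lim f y \<noteq> 0"
  shows "\<exists>\<delta>>0. \<exists>c>0. (\<forall>z. y < z \<and> z < y + \<delta> \<longrightarrow> f z \<ge> c) \<or> (\<forall>z. y < z \<and> z < y + \<delta> \<longrightarrow> f z \<le> - c)"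
proof -
  define c where "c = \<bar>right_lim f y\<bar> / 2"
  have c: "c > 0" using ne by (simp add: c_def)
  have "eventually (\<lambda>v. dist (f v) (right_lim f y) < c) (at_right y)"
    using tendsto_iff[THEN iffD1, OF reg_lims(2)[OF reg], rule_format, of c] c by simp
  then obtain b where b: "b > y" "\<And>v. y < v \<Longrightarrow> v < b \<Longrightarrow> \<bar>f v - right_lim f y\<bar> < c"
    unfolding eventually_at_right_field dist_real_def by blast
  have d: "0 < b - y" using b by auto
  have sg: "(\<forall>z. y < z \<and> z < y + (b - y) \<longrightarrow> c \<le> f z) \<or> (\<forall>z. y < z \<and> z < y + (b - y) \<longrightarrow> f z \<le> - c)"
  proof (cases "right_lim f y > 0")
    case True
    have "\<forall>z. y < z \<and> z < y + (b - y) \<longrightarrow> c \<le> f z"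
    proof (intro allI impI)
      fix z assume "y < z \<and> z < y + (b - y)"
      then have "\<bar>f z - right_lim f y\<bar> < c" using b(2) by auto
      then show "c \<le> f z" using True unfolding c_def by arith
    qed
    then show ?thesis by blast
  next
    case False
    have "\<forall>z. y < z \<and> z < y + (b - y) \<longrightarrow> f z \<le> - c"
    proof (intro allI impI)
      fix z assume "y < z \<and> z < y + (b - y)"
      then have "\<bar>f z - right_lim f y\<bar> < c" using b(2) by auto
      then show "f z \<le> - c" using False ne unfolding c_def by arith
    qed
    then show ?thesis by blast
  qed
  show ?thesis using d c sg by blast
qed

lemma small_N:
  assumes "(e::real) > 0"
  shows "\<exists>N. \<forall>n\<ge>N. 1 / real (Suc n) < e"
proof -
  obtain N where N: "inverse (real (Suc N)) < e" using reals_Archimedean[OF assms] by blast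
  show ?thesis
  proof (intro exI allI impI)
    fix n assume "N \<le> n"
    then have "1 / real (Suc n) \<le> 1 / real (Suc N)" by (simp add: frac_le)
    then show "1 / real (Suc n) < e" using N by (simp add: inverse_eq_divide)
  qed
qed

lemma excl_left:
  assumes reg: "regulated f"
    and sols: "\<And>n. caratheodory_solution_on f x0 {0..} (Y n)"
    and mono: "\<And>n. mono_on {0..} (Y n) \<or> antimono_on {0..} (Y n)"
    and h: "h > 0" "0 \<le> s - 2 * h"
    and close: "\<And>n v. v \<in> {s - 2 * h..s + 2 * h} \<Longrightarrow> \<bar>Y n v - y\<bar> < 1 / Suc n"
    and ne: "left_lim f y \<noteq> 0"
  shows "\<exists>\<delta>>0. \<exists>N. \<forall>n\<ge>N. \<forall>u\<in>{s - h..s + h}. \<not> (y - \<delta> < Y n u \<and> Y n u < y)"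
proof -
  obtain \<delta> c where dc: "\<delta> > 0" "c > 0"
    and sgn: "(\<forall>z. y - \<delta> < z \<and> z < y \<longrightarrow> f z \<ge> c) \<or> (\<forall>z. y - \<delta> < z \<and> z < y \<longrightarrow> f z \<le> - c)"
    using left_sign[OF reg ne] by blast
  have "min \<delta> (c * h / 2) > 0" using dc h by auto
  then obtain N where N: "\<And>n. n \<ge> N \<Longrightarrow> 1 / real (Suc n) < min \<delta> (c * h / 2)"
    using small_N by blast
  show ?thesis
  proof (intro exI[of _ \<delta>] conjI exI[of _ N] allI impI ballI notI)
    show "\<delta> > 0" by fact
    fix n u assume n: "N \<le> n" and u: "u \<in> {s - h..s + h}" and yu: "y - \<delta> < Y n u \<and> Y n u < y"
    define \<eta> where "\<eta> = 1 / real (Suc n)"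
    have eta: "\<eta> < \<delta>" "2 * \<eta> < c * h" using N[OF n] by (auto simp: \<eta>_def)
    from mono[of n] show False
    proof
      assume m: "mono_on {0..} (Y n)"
      show False
      proof (rule trap_core[OF sols[of n], of "u - h" u "y - \<delta>" y c y \<eta>])
        show "0 \<le> u - h" "u - h \<le> u" using u h by auto
        show "\<And>v. v \<in> {u - h..u} \<Longrightarrow> y - \<delta> < Y n v \<and> Y n v < y"
        proof -
          fix v assume v: "v \<in> {u - h..u}"
          have "Y n v \<le> Y n u" using m v u h unfolding monotone_on_def by auto
          moreover have "\<bar>Y n v - y\<bar> < \<eta>" using close[of v n] v u unfolding \<eta>_def by auto
          ultimately show "y - \<delta> < Y n v \<and> Y n v < y" using yu eta by auto
        qed
        show "(\<forall>z. y - \<delta> < z \<and> z < y \<longrightarrow> c \<le> f z) \<or> (\<forall>z. y - \<delta> < z \<and> z < y \<longrightarrow> f z \<le> - c)" by fact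
        show "\<bar>Y n (u - h) - y\<bar> < \<eta>" "\<bar>Y n u - y\<bar> < \<eta>" using close[of _ n] u unfolding \<eta>_def by auto
        show "2 * \<eta> < c * (u - (u - h))" using eta by simp
      qed
    next
      assume m: "antimono_on {0..} (Y n)"
      show False
      proof (rule trap_core[OF sols[of n], of u "u + h" "y - \<delta>" y c y \<eta>])
        show "0 \<le> u" "u \<le> u + h" using u h by auto
        show "\<And>v. v \<in> {u..u + h} \<Longrightarrow> y - \<delta> < Y n v \<and> Y n v < y"
        proof -
          fix v assume v: "v \<in> {u..u + h}"
          have "Y n v \<le> Y n u" using m v u h unfolding monotone_on_def by auto
          moreover have "\<bar>Y n v - y\<bar> < \<eta>" using close[of v n] v u unfolding \<eta>_def by auto
          ultimately show "y - \<delta> < Y n v \<and> Y n v < y" using yu eta by auto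
        qed
        show "(\<forall>z. y - \<delta> < z \<and> z < y \<longrightarrow> c \<le> f z) \<or> (\<forall>z. y - \<delta> < z \<and> z < y \<longrightarrow> f z \<le> - c)" by fact
        show "\<bar>Y n u - y\<bar> < \<eta>" "\<bar>Y n (u + h) - y\<bar> < \<eta>" using close[of _ n] u unfolding \<eta>_def by auto
        show "2 * \<eta> < c * (u + h - u)" using eta by simp
      qed
    qed
  qed
qed

lemma excl_right:
  assumes reg: "regulated f"
    and sols: "\<And>n. caratheodory_solution_on f x0 {0..} (Y n)"
    and mono: "\<And>n. mono_on {0..} (Y n) \<or> antimono_on {0..} (Y n)"
    and h: "h > 0" "0 \<le> s - 2 * h"
    and close: "\<And>n v. v \<in> {s - 2 * h..s + 2 * h} \<Longrightarrow> \<bar>Y n v - y\<bar> < 1 / Suc n"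
    and ne: "right_lim f y \<noteq> 0"
  shows "\<exists>\<delta>>0. \<exists>N. \<forall>n\<ge>N. \<forall>u\<in>{s - h..s + h}. \<not> (y < Y n u \<and> Y n u < y + \<delta>)"
proof -
  obtain \<delta> c where dc: "\<delta> > 0" "c > 0"
    and sgn: "(\<forall>z. y < z \<and> z < y + \<delta> \<longrightarrow> f z \<ge> c) \<or> (\<forall>z. y < z \<and> z < y + \<delta> \<longrightarrow> f z \<le> - c)"
    using right_sign[OF reg ne] by blast
  have "min \<delta> (c * h / 2) > 0" using dc h by auto
  then obtain N where N: "\<And>n. n \<ge> N \<Longrightarrow> 1 / real (Suc n) < min \<delta> (c * h / 2)"
    using small_N by blast
  show ?thesis
  proof (intro exI[of _ \<delta>] conjI exI[of _ N] allI impI ballI notI)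
    show "\<delta> > 0" by fact
    fix n u assume n: "N \<le> n" and u: "u \<in> {s - h..s + h}" and yu: "y < Y n u \<and> Y n u < y + \<delta>"
    define \<eta> where "\<eta> = 1 / real (Suc n)"
    have eta: "\<eta> < \<delta>" "2 * \<eta> < c * h" using N[OF n] by (auto simp: \<eta>_def)
    from mono[of n] show False
    proof
      assume m: "mono_on {0..} (Y n)"
      show False
      proof (rule trap_core[OF sols[of n], of u "u + h" y "y + \<delta>" c y \<eta>])
        show "0 \<le> u" "u \<le> u + h" using u h by auto
        show "\<And>v. v \<in> {u..u + h} \<Longrightarrow> y < Y n v \<and> Y n v < y + \<delta>"
        proof -
          fix v assume v: "v \<in> {u..u + h}"
          have "Y n u \<le> Y n v" using m v u h unfolding monotone_on_def by auto
          moreover have "\<bar>Y n v - y\<bar> < \<eta>" using close[of v n] v u unfolding \<eta>_def by auto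
          ultimately show "y < Y n v \<and> Y n v < y + \<delta>" using yu eta by auto
        qed
        show "(\<forall>z. y < z \<and> z < y + \<delta> \<longrightarrow> c \<le> f z) \<or> (\<forall>z. y < z \<and> z < y + \<delta> \<longrightarrow> f z \<le> - c)" by fact
        show "\<bar>Y n u - y\<bar> < \<eta>" "\<bar>Y n (u + h) - y\<bar> < \<eta>" using close[of _ n] u unfolding \<eta>_def by auto
        show "2 * \<eta> < c * (u + h - u)" using eta by simp
      qed
    next
      assume m: "antimono_on {0..} (Y n)"
      show False
      proof (rule trap_core[OF sols[of n], of "u - h" u y "y + \<delta>" c y \<eta>])
        show "0 \<le> u - h" "u - h \<le> u" using u h by auto
        show "\<And>v. v \<in> {u - h..u} \<Longrightarrow> y < Y n v \<and> Y n v < y + \<delta>"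
        proof -
          fix v assume v: "v \<in> {u - h..u}"
          have "Y n u \<le> Y n v" using m v u h unfolding monotone_on_def by auto
          moreover have "\<bar>Y n v - y\<bar> < \<eta>" using close[of v n] v u unfolding \<eta>_def by auto
          ultimately show "y < Y n v \<and> Y n v < y + \<delta>" using yu eta by auto
        qed
        show "(\<forall>z. y < z \<and> z < y + \<delta> \<longrightarrow> c \<le> f z) \<or> (\<forall>z. y < z \<and> z < y + \<delta> \<longrightarrow> f z \<le> - c)" by fact
        show "\<bar>Y n (u - h) - y\<bar> < \<eta>" "\<bar>Y n u - y\<bar> < \<eta>" using close[of _ n] u unfolding \<eta>_def by auto
        show "2 * \<eta> < c * (u - (u - h))" using eta by simp
      qed
    qed
  qed
qed

lemma A2_nz:
  assumes a2: "A2 f" and "f y \<noteq> 0"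
  shows "left_lim f y \<noteq> 0" "right_lim f y \<noteq> 0"
  using assms unfolding A2_def by auto

lemma plateau:
  assumes a1: "A1 f" and a2: "A2 f"
    and sols: "\<And>n. caratheodory_solution_on f x0 {0..} (Y n)"
    and mono: "\<And>n. mono_on {0..} (Y n) \<or> antimono_on {0..} (Y n)"
    and h: "h > 0" "0 \<le> s - 2 * h"
    and close: "\<And>n v. v \<in> {s - 2 * h..s + 2 * h} \<Longrightarrow> \<bar>Y n v - y\<bar> < 1 / Suc n"
  shows "f y = 0 \<and> (\<lambda>n. f (Y n s)) \<longlonglongrightarrow> 0"
proof -
  have reg: "regulated f" using A1_reg[OF a1] .
  have fy: "f y = 0"
  proof (rule ccontr)
    assume fy: "f y \<noteq> 0"
    obtain \<delta>1 N1 where d1: "\<delta>1 > 0" "\<And>n u. n \<ge> N1 \<Longrightarrow> u \<in> {s - h..s + h} \<Longrightarrow> \<not> (y - \<delta>1 < Y n u \<and> Y n u < y)"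
      using excl_left[OF reg sols mono h close A2_nz(1)[OF a2 fy]] by blast
    obtain \<delta>2 N2 where d2: "\<delta>2 > 0" "\<And>n u. n \<ge> N2 \<Longrightarrow> u \<in> {s - h..s + h} \<Longrightarrow> \<not> (y < Y n u \<and> Y n u < y + \<delta>2)"
      using excl_right[OF reg sols mono h close A2_nz(2)[OF a2 fy]] by blast
    have "min \<delta>1 \<delta>2 > 0" using d1 d2 by auto
    then obtain N3 where N3: "\<And>n. n \<ge> N3 \<Longrightarrow> 1 / real (Suc n) < min \<delta>1 \<delta>2" using small_N by blast
    define n where "n = max N1 (max N2 N3)"
    have eq: "Y n u = y" if u: "u \<in> {s - h..s + h}" for u
    proof -
      have "\<bar>Y n u - y\<bar> < 1 / Suc n" using close[of u n] u h by auto
      moreover have "1 / real (Suc n) < min \<delta>1 \<delta>2" using N3[of n] by (auto simp: n_def)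
      moreover have "\<not> (y - \<delta>1 < Y n u \<and> Y n u < y)" using d1(2)[of n u] u by (auto simp: n_def)
      moreover have "\<not> (y < Y n u \<and> Y n u < y + \<delta>2)" using d2(2)[of n u] u by (auto simp: n_def)
      ultimately show ?thesis by linarith
    qed
    have I: "tset {0..}" by (rule tset_simps)
    have int: "((\<lambda>v. f (Y n v)) has_integral (Y n (s + h) - Y n (s - h))) {s - h..s + h}"
      by (rule sol_incr[OF sols I]) (use h in auto)
    then have int0: "((\<lambda>v. f (Y n v)) has_integral 0) {s - h..s + h}" using eq h by simp
    have "((\<lambda>v. f (Y n v)) has_integral (f y * (2 * h))) {s - h..s + h}"
    proof -
      have "((\<lambda>_. f y) has_integral (f y * (2 * h))) {s - h..s + h}"
        using has_integral_const_real[of "f y" "s - h" "s + h"] h by (simp add: mult.commute)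
      then show ?thesis by (rule has_integral_eq[rotated]) (use eq in auto)
    qed
    then have "f y * (2 * h) = 0" using int0 has_integral_unique by blast
    then show False using fy h by simp
  qed
  have left: "\<exists>\<delta>>0. \<exists>N. \<forall>n\<ge>N. y - \<delta> < Y n s \<and> Y n s < y \<longrightarrow> \<bar>f (Y n s)\<bar> < r" if r: "r > 0" for r
  proof (cases "left_lim f y = 0")
    case True
    have "eventually (\<lambda>v. dist (f v) (left_lim f y) < r) (at_left y)"
      using tendsto_iff[THEN iffD1, OF reg_lims(1)[OF reg], rule_format, of r] r by simp
    then obtain b where b: "b < y" "\<And>v. b < v \<Longrightarrow> v < y \<Longrightarrow> \<bar>f v\<bar> < r"
      unfolding eventually_at_left_field dist_real_def True by auto
    show ?thesis
      by (rule exI[of _ "y - b"]) (use b in auto)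
  next
    case False
    obtain \<delta>1 N1 where d1: "\<delta>1 > 0" "\<And>n u. n \<ge> N1 \<Longrightarrow> u \<in> {s - h..s + h} \<Longrightarrow> \<not> (y - \<delta>1 < Y n u \<and> Y n u < y)"
      using excl_left[OF reg sols mono h close False] by blast
    have "\<forall>n\<ge>N1. y - \<delta>1 < Y n s \<and> Y n s < y \<longrightarrow> \<bar>f (Y n s)\<bar> < r"
      using d1(2)[of _ s] h by auto
    then show ?thesis using d1(1) by blast
  qed
  have right: "\<exists>\<delta>>0. \<exists>N. \<forall>n\<ge>N. y < Y n s \<and> Y n s < y + \<delta> \<longrightarrow> \<bar>f (Y n s)\<bar> < r" if r: "r > 0" for r
  proof (cases "right_lim f y = 0")
    case True
    have "eventually (\<lambda>v. dist (f v) (right_lim f y) < r) (at_right y)"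
      using tendsto_iff[THEN iffD1, OF reg_lims(2)[OF reg], rule_format, of r] r by simp
    then obtain b where b: "b > y" "\<And>v. y < v \<Longrightarrow> v < b \<Longrightarrow> \<bar>f v\<bar> < r"
      unfolding eventually_at_right_field dist_real_def True by auto
    show ?thesis
      by (rule exI[of _ "b - y"]) (use b in auto)
  next
    case False
    obtain \<delta>2 N2 where d2: "\<delta>2 > 0" "\<And>n u. n \<ge> N2 \<Longrightarrow> u \<in> {s - h..s + h} \<Longrightarrow> \<not> (y < Y n u \<and> Y n u < y + \<delta>2)"
      using excl_right[OF reg sols mono h close False] by blast
    have "\<forall>n\<ge>N2. y < Y n s \<and> Y n s < y + \<delta>2 \<longrightarrow> \<bar>f (Y n s)\<bar> < r"
      using d2(2)[of _ s] h by auto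
    then show ?thesis using d2(1) by blast
  qed
  have "(\<lambda>n. f (Y n s)) \<longlonglongrightarrow> 0"
    unfolding LIMSEQ_iff
  proof (intro allI impI)
    fix r :: real assume r: "r > 0"
    obtain \<delta>l Nl where l: "\<delta>l > 0" "\<And>n. n \<ge> Nl \<Longrightarrow> y - \<delta>l < Y n s \<and> Y n s < y \<Longrightarrow> \<bar>f (Y n s)\<bar> < r"
      using left[OF r] by blast
    obtain \<delta>r Nr where rr: "\<delta>r > 0" "\<And>n. n \<ge> Nr \<Longrightarrow> y < Y n s \<and> Y n s < y + \<delta>r \<Longrightarrow> \<bar>f (Y n s)\<bar> < r"
      using right[OF r] by blast
    have "min \<delta>l \<delta>r > 0" using l rr by auto
    then obtain N3 where N3: "\<And>n. n \<ge> N3 \<Longrightarrow> 1 / real (Suc n) < min \<delta>l \<delta>r" using small_N by blast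
    show "\<exists>no. \<forall>n\<ge>no. norm (f (Y n s) - 0) < r"
    proof (intro exI[of _ "max Nl (max Nr N3)"] allI impI)
      fix n assume n: "max Nl (max Nr N3) \<le> n"
      have c: "\<bar>Y n s - y\<bar> < 1 / Suc n" using close[of s n] h by auto
      have m: "1 / real (Suc n) < min \<delta>l \<delta>r" using N3 n by auto
      consider "Y n s < y" | "Y n s = y" | "Y n s > y" by linarith
      then show "norm (f (Y n s) - 0) < r"
      proof cases
        case 1 then show ?thesis using l(2)[of n] n c m by auto
      next
        case 2 then show ?thesis using fy r by simp
      next
        case 3 then show ?thesis using rr(2)[of n] n c m by auto
      qed
    qed
  qed
  then show ?thesis using fy by simp
qed

lemma level_finite:
  fixes x :: "real \<Rightarrow> real"
  assumes m: "mono_on {0..t} x \<or> antimono_on {0..t} x"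
  shows "finite {s \<in> {0..t}. x s = y \<and> \<not> (\<exists>e>0. \<forall>u. \<bar>u - s\<bar> < e \<longrightarrow> 0 < u \<and> u < t \<and> x u = x s)}"
    (is "finite ?E")
proof -
  define Ly where "Ly = {s \<in> {0..t}. x s = y}"
  have sub: "?E \<subseteq> {Inf Ly, Sup Ly}"
  proof
    fix s assume s: "s \<in> ?E"
    then have sL: "s \<in> Ly" by (auto simp: Ly_def)
    have bb: "bdd_below Ly" "bdd_above Ly" unfolding Ly_def by (auto intro: bdd_belowI[of _ 0] bdd_aboveI[of _ t])
    show "s \<in> {Inf Ly, Sup Ly}"
    proof (rule ccontr)
      assume "s \<notin> {Inf Ly, Sup Ly}"
      moreover have "Inf Ly \<le> s" "s \<le> Sup Ly" using sL bb by (auto intro: cInf_lower cSup_upper)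
      ultimately have "Inf Ly < s" "s < Sup Ly" by auto
      then obtain a c where ac: "a \<in> Ly" "a < s" "c \<in> Ly" "s < c"
        using sL by (metis cInf_less_iff less_cSup_iff bb empty_iff)
      have eq: "x u = y" if "a \<le> u" "u \<le> c" for u
      proof -
        have u: "u \<in> {0..t}" using ac that by (auto simp: Ly_def)
        have aI: "a \<in> {0..t}" "c \<in> {0..t}" using ac by (auto simp: Ly_def)
        from m have "x a \<le> x u \<and> x u \<le> x c \<or> x a \<ge> x u \<and> x u \<ge> x c"
        proof
          assume "mono_on {0..t} x"
          then show ?thesis using monotone_onD[of "{0..t}" "(\<le>)" "(\<le>)" x] aI u that by auto
        next
          assume "antimono_on {0..t} x"
          then show ?thesis using monotone_onD[of "{0..t}" "(\<le>)" "(\<ge>)" x] aI u that by auto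
        qed
        then show ?thesis using ac by (auto simp: Ly_def)
      qed
      have pos: "0 < min (s - a) (c - s)" using ac by auto
      have "\<forall>u. \<bar>u - s\<bar> < min (s - a) (c - s) \<longrightarrow> 0 < u \<and> u < t \<and> x u = x s"
      proof (intro allI impI)
        fix u assume u: "\<bar>u - s\<bar> < min (s - a) (c - s)"
        then have "a < u" "u < c" by auto
        then show "0 < u \<and> u < t \<and> x u = x s" using eq[of u] eq[of s] ac by (auto simp: Ly_def)
      qed
      then have "\<exists>e>0. \<forall>u. \<bar>u - s\<bar> < e \<longrightarrow> 0 < u \<and> u < t \<and> x u = x s" using pos by blast
      then show False using s by blast
    qed
  qed
  then show ?thesis using finite_subset by blast
qed

lemma seq_from_filter:
  assumes F: "F \<noteq> bot" and ev: "\<forall>\<^sub>F i in F. caratheodory_solution_on f x0 {0..} (X i)"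
    and ul: "uniform_limit {0..t} X x F"
  shows "\<exists>Y. \<forall>n. caratheodory_solution_on f x0 {0..} (Y n) \<and> (\<forall>s\<in>{0..t}. \<bar>Y n s - x s\<bar> < 1 / Suc n)"
proof -
  have "\<forall>n. \<exists>i. caratheodory_solution_on f x0 {0..} (X i) \<and> (\<forall>s\<in>{0..t}. \<bar>X i s - x s\<bar> < 1 / Suc n)"
  proof
    fix n :: nat
    have "\<forall>\<^sub>F i in F. \<forall>s\<in>{0..t}. dist (X i s) (x s) < 1 / Suc n"
      using ul unfolding uniform_limit_iff by auto
    then have "\<forall>\<^sub>F i in F. caratheodory_solution_on f x0 {0..} (X i) \<and> (\<forall>s\<in>{0..t}. \<bar>X i s - x s\<bar> < 1 / Suc n)"
      using ev by eventually_elim (auto simp: dist_real_def)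
    then show "\<exists>i. caratheodory_solution_on f x0 {0..} (X i) \<and> (\<forall>s\<in>{0..t}. \<bar>X i s - x s\<bar> < 1 / Suc n)"
      using eventually_happens'[OF F] by blast
  qed
  then obtain g where "\<forall>n. caratheodory_solution_on f x0 {0..} (X (g n)) \<and> (\<forall>s\<in>{0..t}. \<bar>X (g n) s - x s\<bar> < 1 / Suc n)"
    by metis
  then show ?thesis by (intro exI[of _ "\<lambda>n. X (g n)"]) auto
qed

lemma closed_at:
  assumes a1: "A1 f" and a2: "A2 f" and t: "0 \<le> t"
    and sols: "\<And>n. caratheodory_solution_on f x0 {0..} (Y n)"
    and close: "\<And>n s. s \<in> {0..t} \<Longrightarrow> \<bar>Y n s - x s\<bar> < 1 / Suc n"
  shows "((\<lambda>s. f (x s)) has_integral (x t - x0)) {0..t}"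
proof -
  have reg: "regulated f" using A1_reg[OF a1] .
  obtain B where B: "\<And>z. \<bar>f z\<bar> \<le> B" using A1_bound[OF a1] by blast
  have I: "tset {0..}" by (rule tset_simps)
  have Ymono: "mono_on {0..} (Y n) \<or> antimono_on {0..} (Y n)" for n
    using sol_mono[OF a1 a2 sols I] .
  have conv: "(\<lambda>n. Y n s) \<longlonglongrightarrow> x s" if s: "s \<in> {0..t}" for s
    unfolding LIMSEQ_iff
  proof (intro allI impI)
    fix r :: real assume "r > 0"
    then obtain N where N: "\<And>n. n \<ge> N \<Longrightarrow> 1 / real (Suc n) < r" using small_N by blast
    show "\<exists>no. \<forall>n\<ge>no. norm (Y n s - x s) < r"
      using N close[OF s] by (intro exI[of _ N]) (auto intro: less_trans)
  qed
  have xmono: "mono_on {0..t} x \<or> antimono_on {0..t} x"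
  proof (rule ccontr)
    assume "\<not> (mono_on {0..t} x \<or> antimono_on {0..t} x)"
    then obtain a b c d where ab: "a \<in> {0..t}" "b \<in> {0..t}" "a \<le> b" "x a > x b"
      and cd: "c \<in> {0..t}" "d \<in> {0..t}" "c \<le> d" "x c < x d"
      unfolding monotone_on_def by (auto simp: not_le)
    have "0 < x a - x b" using ab by simp
    from order_tendstoD(1)[OF tendsto_diff[OF conv[OF ab(1)] conv[OF ab(2)]] this]
    have e1: "eventually (\<lambda>n. Y n a - Y n b > 0) sequentially" .
    have "0 < x d - x c" using cd by simp
    from order_tendstoD(1)[OF tendsto_diff[OF conv[OF cd(2)] conv[OF cd(1)]] this]
    have e2: "eventually (\<lambda>n. Y n d - Y n c > 0) sequentially" .
    obtain n where n: "Y n a - Y n b > 0" "Y n d - Y n c > 0"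
      using eventually_happens'[OF _ eventually_conj[OF e1 e2]] by auto
    show False using Ymono[of n] n ab cd unfolding monotone_on_def by force
  qed
  define D where "D = {y. \<not> isCont f y}"
  have cD: "countable D" unfolding D_def by (rule reg_countable_disc[OF reg])
  define plat where "plat s \<longleftrightarrow> (\<exists>e>0. \<forall>u. \<bar>u - s\<bar> < e \<longrightarrow> 0 < u \<and> u < t \<and> x u = x s)" for s
  define N where "N = {0, t} \<union> (\<Union>y\<in>D. {s \<in> {0..t}. x s = y \<and> \<not> plat s})"
  have cN: "countable N"
    unfolding N_def plat_def using level_finite[OF xmono] cD
    by (intro countable_Un countable_UN) (auto intro: countable_finite)
  have negN: "negligible N" by (rule countable_negligible[OF cN])
  have pconv: "(\<lambda>n. f (Y n s)) \<longlonglongrightarrow> f (x s)" if s: "s \<in> {0..t}" "s \<notin> N" for s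
  proof (cases "isCont f (x s)")
    case True
    then show ?thesis using isCont_tendsto_compose[OF True conv[OF s(1)]] by simp
  next
    case False
    then have xD: "x s \<in> D" by (simp add: D_def)
    have "s \<notin> {s \<in> {0..t}. x s = x s \<and> \<not> plat s}"
    proof
      assume "s \<in> {s \<in> {0..t}. x s = x s \<and> \<not> plat s}"
      then have "s \<in> (\<Union>y\<in>D. {s \<in> {0..t}. x s = y \<and> \<not> plat s})" using xD by blast
      then show False using s(2) unfolding N_def by simp
    qed
    then have "plat s" using s(1) by blast
    then obtain e where e: "e > 0" "\<And>u. \<bar>u - s\<bar> < e \<Longrightarrow> 0 < u \<and> u < t \<and> x u = x s"
      unfolding plat_def by blast
    define h where "h = e / 4"
    have h1: "h > 0" using e(1) by (simp add: h_def)
    have "\<bar>(s - 2 * h) - s\<bar> < e" using e(1) by (simp add: h_def)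
    then have "0 < s - 2 * h" using e(2)[of "s - 2 * h"] by simp
    then have h: "h > 0" "0 \<le> s - 2 * h" using h1 by auto
    have cl: "\<bar>Y n v - x s\<bar> < 1 / Suc n" if v: "v \<in> {s - 2 * h..s + 2 * h}" for n v
    proof -
      have "\<bar>v - s\<bar> < e" using v e(1) unfolding h_def by auto
      then have "0 < v \<and> v < t \<and> x v = x s" by (rule e(2))
      then show ?thesis using close[of v n] by auto
    qed
    have "f (x s) = 0 \<and> (\<lambda>n. f (Y n s)) \<longlonglongrightarrow> 0"
      by (rule plateau[OF a1 a2 sols Ymono h cl])
    then show ?thesis by simp
  qed
  define g where "g n s = (if s \<in> N then 0 else f (Y n s))" for n s
  define G where "G s = (if s \<in> N then 0 else f (x s))" for s
  have gint: "(g n has_integral (Y n t - x0)) {0..t}" for n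
  proof -
    have "((\<lambda>s. f (Y n s)) has_integral (Y n t - x0)) {0..t}"
      using sols[of n] t unfolding caratheodory_solution_on_def by auto
    then show ?thesis by (rule has_integral_spike[OF negN, rotated]) (auto simp: g_def)
  qed
  have dc: "G integrable_on {0..t} \<and> (\<lambda>n. integral {0..t} (g n)) \<longlonglongrightarrow> integral {0..t} G"
  proof (intro conjI)
    have "\<And>n. g n integrable_on {0..t}" using gint by blast
    moreover have "(\<lambda>_. B) integrable_on {0..t}" using has_integral_const_real by blast
    moreover have B0: "0 \<le> B" using B[of 0] by linarith
    moreover have "\<And>n s. s \<in> {0..t} \<Longrightarrow> norm (g n s) \<le> B" using B B0 by (auto simp: g_def)
    moreover have "\<And>s. s \<in> {0..t} \<Longrightarrow> (\<lambda>n. g n s) \<longlonglongrightarrow> G s"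
      using pconv by (auto simp: g_def G_def)
    ultimately show "G integrable_on {0..t}" "(\<lambda>n. integral {0..t} (g n)) \<longlonglongrightarrow> integral {0..t} G"
      using dominated_convergence[of g "{0..t}" "\<lambda>_. B" G] by auto
  qed
  have "(\<lambda>n. integral {0..t} (g n)) = (\<lambda>n. Y n t - x0)" using gint integral_unique by blast
  moreover have "(\<lambda>n. Y n t - x0) \<longlonglongrightarrow> x t - x0" using conv[of t] t by (auto intro: tendsto_diff)
  ultimately have "integral {0..t} G = x t - x0" using dc LIMSEQ_unique by metis
  then have "(G has_integral (x t - x0)) {0..t}" using dc by (metis integrable_integral)
  then show ?thesis by (rule has_integral_spike[OF negN, rotated]) (auto simp: G_def)
qed

lemma closed_sol:
  assumes a1: "A1 f" and a2: "A2 f" and F: "F \<noteq> bot"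
    and ev: "\<forall>\<^sub>F i in F. caratheodory_solution_on f x0 {0..} (X i)"
    and ul: "\<forall>T\<ge>0. uniform_limit {0..T} X x F"
  shows "caratheodory_solution_on f x0 {0..} x"
  unfolding caratheodory_solution_on_def
proof
  fix t assume "t \<in> {0::real..}"
  then have t: "0 \<le> t" by simp
  obtain Y where Y: "\<And>n. caratheodory_solution_on f x0 {0..} (Y n)"
    "\<And>n s. s \<in> {0..t} \<Longrightarrow> \<bar>Y n s - x s\<bar> < 1 / Suc n"
    using seq_from_filter[OF F ev ul[rule_format, OF t]] by blast
  show "((\<lambda>s. f (x s)) has_integral (x t - x0)) {0..t}"
    by (rule closed_at[OF a1 a2 t Y])
qed

lemma cont_lims:
  fixes f :: "real \<Rightarrow> real"
  assumes "isCont f y"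
  shows "right_lim f y = f y" "left_lim f y = f y"
proof -
  have t: "(f \<longlongrightarrow> f y) (at y)" using assms by (simp add: isCont_def)
  have "(f \<longlongrightarrow> f y) (at_right y)" by (rule tendsto_mono[OF at_le t]) simp
  then show "right_lim f y = f y" unfolding right_lim_def by (rule tendsto_Lim[rotated]) simp
  have "(f \<longlongrightarrow> f y) (at_left y)" by (rule tendsto_mono[OF at_le t]) simp
  then show "left_lim f y = f y" unfolding left_lim_def by (rule tendsto_Lim[rotated]) simp
qed

lemma right_pos_nbhd:
  fixes f :: "real \<Rightarrow> real"
  assumes reg: "regulated f" and R: "right_lim f z > 0"
  shows "\<exists>b>z. \<forall>w. z < w \<and> w < b \<longrightarrow> f w > 0 \<and> left_lim f w > 0 \<and> right_lim f w > 0"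
proof -
  define c where "c = right_lim f z / 2"
  have c: "c > 0" using R by (simp add: c_def)
  have "eventually (\<lambda>v. f v > c) (at_right z)"
    using order_tendstoD(1)[OF reg_lims(2)[OF reg], of c] R by (simp add: c_def)
  then obtain b where b: "b > z" "\<And>v. z < v \<Longrightarrow> v < b \<Longrightarrow> f v > c"
    unfolding eventually_at_right_field by blast
  have "\<forall>w. z < w \<and> w < b \<longrightarrow> f w > 0 \<and> left_lim f w > 0 \<and> right_lim f w > 0"
  proof (intro allI impI)
    fix w assume w: "z < w \<and> w < b"
    have "c \<le> left_lim f w"
    proof (rule tendsto_lowerbound[OF reg_lims(1)[OF reg]])
      show "\<forall>\<^sub>F v in at_left w. c \<le> f v"
        unfolding eventually_at_left_field using w b by (intro exI[of _ z]) (auto intro: less_imp_le)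
    qed simp
    moreover have "c \<le> right_lim f w"
    proof (rule tendsto_lowerbound[OF reg_lims(2)[OF reg]])
      show "\<forall>\<^sub>F v in at_right w. c \<le> f v"
        unfolding eventually_at_right_field using w b by (intro exI[of _ b]) (auto intro: less_imp_le)
    qed simp
    ultimately show "f w > 0 \<and> left_lim f w > 0 \<and> right_lim f w > 0" using b w c by force
  qed
  then show ?thesis using b(1) by blast
qed

lemma left_pos_nbhd:
  fixes f :: "real \<Rightarrow> real"
  assumes reg: "regulated f" and L: "left_lim f z > 0"
  shows "\<exists>b<z. \<forall>w. b < w \<and> w < z \<longrightarrow> f w \<ge> left_lim f z / 2"
proof -
  have "eventually (\<lambda>v. f v > left_lim f z / 2) (at_left z)"
    using order_tendstoD(1)[OF reg_lims(1)[OF reg], of "left_lim f z / 2"] L by simp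
  then obtain b where b: "b < z" "\<And>v. b < v \<Longrightarrow> v < z \<Longrightarrow> f v > left_lim f z / 2"
    unfolding eventually_at_left_field by blast
  then show ?thesis by (intro exI[of _ b]) (auto intro: less_imp_le)
qed

lemma right_pos_nbhd2:
  fixes f :: "real \<Rightarrow> real"
  assumes reg: "regulated f" and R: "right_lim f z > 0"
  shows "\<exists>b>z. \<forall>w. z < w \<and> w < b \<longrightarrow> f w \<ge> right_lim f z / 2"
proof -
  have "eventually (\<lambda>v. f v > right_lim f z / 2) (at_right z)"
    using order_tendstoD(1)[OF reg_lims(2)[OF reg], of "right_lim f z / 2"] R by simp
  then obtain b where b: "b > z" "\<And>v. z < v \<Longrightarrow> v < b \<Longrightarrow> f v > right_lim f z / 2"
    unfolding eventually_at_right_field by blast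
  then show ?thesis by (intro exI[of _ b]) (auto intro: less_imp_le)
qed

lemma cont_lb:
  fixes f :: "real \<Rightarrow> real"
  assumes reg: "regulated f" and az: "a \<le> z" and Ra: "right_lim f a > 0"
    and good: "\<And>w. a < w \<Longrightarrow> w \<le> z \<Longrightarrow> f w \<noteq> 0 \<and> left_lim f w > 0 \<and> right_lim f w > 0"
  shows "\<exists>c>0. \<forall>w\<in>{a..z}. isCont f w \<longrightarrow> f w \<ge> c"
proof (rule ccontr)
  assume "\<not> (\<exists>c>0. \<forall>w\<in>{a..z}. isCont f w \<longrightarrow> f w \<ge> c)"
  then have "\<forall>n. \<exists>w. w \<in> {a..z} \<and> isCont f w \<and> f w < 1 / Suc n"
    by (metis not_le of_nat_0_less_iff zero_less_Suc zero_less_divide_iff zero_less_one)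
  then obtain W where W: "\<And>n. W n \<in> {a..z}" "\<And>n. isCont f (W n)" "\<And>n. f (W n) < 1 / Suc n"
    by metis
  obtain l r where l: "l \<in> {a..z}" "strict_mono r" "(W \<circ> r) \<longlonglongrightarrow> l"
    using compact_imp_seq_compact[OF compact_Icc, of a z] W(1) unfolding seq_compact_def by metis
  have Rl: "right_lim f l > 0" using Ra good[of l] l(1) by (cases "l = a") auto
  obtain b1 where b1: "b1 > l" "\<And>w. l < w \<Longrightarrow> w < b1 \<Longrightarrow> f w \<ge> right_lim f l / 2"
    using right_pos_nbhd2[OF reg Rl] by blast
  obtain b2 where b2: "b2 < l" "\<And>w. b2 < w \<Longrightarrow> w < l \<Longrightarrow> a \<le> w \<Longrightarrow> f w \<ge> (if l > a then left_lim f l / 2 else 1)"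
  proof (cases "l > a")
    case True
    then have "left_lim f l > 0" using good[of l] l(1) by auto
    then obtain b where "b < l" "\<And>w. b < w \<Longrightarrow> w < l \<Longrightarrow> f w \<ge> left_lim f l / 2"
      using left_pos_nbhd[OF reg] by blast
    then show ?thesis using that[of b] True by auto
  next
    case False
    then show ?thesis using that[of "l - 1"] l(1) by auto
  qed
  define c where "c = min (right_lim f l / 2) (min (if l > a then left_lim f l / 2 else 1) (if isCont f l then f l else 1))"
  have c: "c > 0"
  proof -
    have "(if l > a then left_lim f l / 2 else 1) > 0" using good[of l] l(1) by auto
    moreover have "(if isCont f l then f l else 1) > 0" using cont_lims(1)[where y=l] Rl by auto
    ultimately show ?thesis using Rl by (simp add: c_def)
  qed
  have lb: "f w \<ge> c" if w: "w \<in> {a..z}" "isCont f w" "b2 < w" "w < b1" for w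
  proof -
    consider "w < l" | "w = l" | "w > l" by linarith
    then show ?thesis
    proof cases
      case 1
      have "a \<le> w" using w by auto
      moreover have "l > a" using 1 w by auto
      ultimately show ?thesis using b2(2)[of w] w 1 by (auto simp: c_def)
    next
      case 2 then show ?thesis using w by (auto simp: c_def)
    next
      case 3 then show ?thesis using b1(2)[of w] w by (auto simp: c_def)
    qed
  qed
  have "eventually (\<lambda>n. b2 < (W \<circ> r) n \<and> (W \<circ> r) n < b1) sequentially"
    using order_tendstoD[OF l(3)] b1(1) b2(1) by (auto intro: eventually_conj)
  moreover have "eventually (\<lambda>n. 1 / real (Suc n) < c) sequentially"
    using small_N[OF c] unfolding eventually_sequentially by blast
  ultimately have "eventually (\<lambda>n. (b2 < (W \<circ> r) n \<and> (W \<circ> r) n < b1) \<and> 1 / real (Suc n) < c) sequentially"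
    by (rule eventually_conj)
  then obtain n where n: "b2 < W (r n)" "W (r n) < b1" "1 / real (Suc n) < c"
    unfolding eventually_sequentially by auto
  have "f (W (r n)) \<ge> c" using lb[of "W (r n)"] W n by auto
  moreover have "f (W (r n)) < 1 / Suc (r n)" using W(3) .
  moreover have "1 / real (Suc (r n)) \<le> 1 / real (Suc n)"
    using seq_suble[OF l(2), of n] by (simp add: frac_le)
  ultimately show False using n by linarith
qed

definition badp :: "(real \<Rightarrow> real) \<Rightarrow> real \<Rightarrow> real \<Rightarrow> bool" where
  "badp f x0 w \<longleftrightarrow> x0 < w \<and> (f w = 0 \<or> left_lim f w \<le> 0 \<or> right_lim f w \<le> 0)"

definition Gs :: "(real \<Rightarrow> real) \<Rightarrow> real \<Rightarrow> real set" where
  "Gs f x0 = {z. x0 \<le> z \<and> (\<forall>w. x0 < w \<and> w \<le> z \<longrightarrow> \<not> badp f x0 w)}"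

definition hh :: "(real \<Rightarrow> real) \<Rightarrow> real \<Rightarrow> real \<Rightarrow> real" where
  "hh f B w = (if isCont f w then 1 / f w else 1 / B)"

definition TT :: "(real \<Rightarrow> real) \<Rightarrow> real \<Rightarrow> real \<Rightarrow> real \<Rightarrow> real" where
  "TT f B x0 z = integral {x0..z} (hh f B)"

definition xs :: "(real \<Rightarrow> real) \<Rightarrow> real \<Rightarrow> real \<Rightarrow> real \<Rightarrow> real" where
  "xs f B x0 t = (if \<exists>z\<in>Gs f x0. TT f B x0 z = t then (THE z. z \<in> Gs f x0 \<and> TT f B x0 z = t) else Sup (Gs f x0))"

lemma negligible_disc: "regulated f \<Longrightarrow> negligible {y. \<not> isCont f y}"
  by (rule countable_negligible[OF reg_countable_disc])

context
  fixes f :: "real \<Rightarrow> real" and x0 B :: real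
  assumes reg: "regulated f" and Bpos: "B > 0" and Bnd: "\<And>z. \<bar>f z\<bar> \<le> B"
    and Rx0: "right_lim f x0 > 0"
begin

lemma Gs_x0: "x0 \<in> Gs f x0"
  unfolding Gs_def by auto

lemma Gs_down: "z \<in> Gs f x0 \<Longrightarrow> x0 \<le> z' \<Longrightarrow> z' \<le> z \<Longrightarrow> z' \<in> Gs f x0"
  unfolding Gs_def by auto

lemma Gs_good: "z \<in> Gs f x0 \<Longrightarrow> x0 < w \<Longrightarrow> w \<le> z \<Longrightarrow> f w \<noteq> 0 \<and> left_lim f w > 0 \<and> right_lim f w > 0"
  unfolding Gs_def badp_def by force

lemma Gs_ge: "z \<in> Gs f x0 \<Longrightarrow> x0 \<le> z"
  unfolding Gs_def by auto

lemma Gs_R: "z \<in> Gs f x0 \<Longrightarrow> right_lim f z > 0"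
  using Gs_good[of z z] Rx0 Gs_ge[of z] by (cases "z = x0") auto

lemma Gs_ext: "z \<in> Gs f x0 \<Longrightarrow> \<exists>z'>z. z' \<in> Gs f x0"
proof -
  assume z: "z \<in> Gs f x0"
  obtain b where b: "b > z" "\<And>w. z < w \<Longrightarrow> w < b \<Longrightarrow> f w > 0 \<and> left_lim f w > 0 \<and> right_lim f w > 0"
    using right_pos_nbhd[OF reg Gs_R[OF z]] by blast
  have "(z + b) / 2 \<in> Gs f x0"
    unfolding Gs_def
  proof (intro CollectI conjI allI impI)
    show "x0 \<le> (z + b) / 2" using Gs_ge[OF z] b by auto
    fix w assume w: "x0 < w \<and> w \<le> (z + b) / 2"
    show "\<not> badp f x0 w"
    proof (cases "w \<le> z")
      case True then show ?thesis using z w unfolding Gs_def by auto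
    next
      case False then show ?thesis using b(2)[of w] w b(1) unfolding badp_def by auto
    qed
  qed
  then show ?thesis using b(1) by (intro exI[of _ "(z + b) / 2"]) auto
qed

lemma Gs_cpos: "z \<in> Gs f x0 \<Longrightarrow> w \<in> {x0..z} \<Longrightarrow> isCont f w \<Longrightarrow> f w > 0"
  using Gs_R[OF Gs_down[of z w]] cont_lims(1)[where f=f and y=w] by auto

lemma Gs_lb: "z \<in> Gs f x0 \<Longrightarrow> \<exists>c>0. \<forall>w\<in>{x0..z}. isCont f w \<longrightarrow> f w \<ge> c"
  by (rule cont_lb[OF reg Gs_ge Rx0]) (auto dest: Gs_good)

lemma hh_lb: "z \<in> Gs f x0 \<Longrightarrow> w \<in> {x0..z} \<Longrightarrow> hh f B w \<ge> 1 / B"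
proof -
  assume z: "z \<in> Gs f x0" and w: "w \<in> {x0..z}"
  show ?thesis
  proof (cases "isCont f w")
    case True
    then have "0 < f w" "f w \<le> B" using Gs_cpos[OF z w] Bnd[of w] by auto
    then show ?thesis using True by (simp add: hh_def frac_le)
  qed (simp add: hh_def)
qed

lemma hh_ub: "z \<in> Gs f x0 \<Longrightarrow> c > 0 \<Longrightarrow> (\<forall>w\<in>{x0..z}. isCont f w \<longrightarrow> f w \<ge> c) \<Longrightarrow>
    w \<in> {x0..z} \<Longrightarrow> hh f B w \<le> max (1 / c) (1 / B)"
proof -
  assume z: "z \<in> Gs f x0" and c: "c > 0" and cl: "\<forall>w\<in>{x0..z}. isCont f w \<longrightarrow> f w \<ge> c"
    and w: "w \<in> {x0..z}"
  show ?thesis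
  proof (cases "isCont f w")
    case True
    then have "c \<le> f w" using cl w by auto
    then have "1 / f w \<le> 1 / c" using c by (simp add: frac_le)
    then show ?thesis using True by (simp add: hh_def)
  qed (simp add: hh_def)
qed

lemma hh_int:
  assumes z: "z \<in> Gs f x0" and c: "c > 0" and cl: "\<forall>w\<in>{x0..z}. isCont f w \<longrightarrow> f w \<ge> c"
  shows "(\<lambda>w. 1 / max (f w) c) integrable_on {x0..z}" "hh f B integrable_on {x0..z}"
    "\<And>v. v \<le> z \<Longrightarrow> integral {x0..v} (hh f B) = integral {x0..v} (\<lambda>w. 1 / max (f w) c)"
proof -
  define D where "D = {y. \<not> isCont f y}"
  have nD: "negligible D" unfolding D_def by (rule negligible_disc[OF reg])
  define S where "S = {x0..z} - D"
  have Sm: "S \<in> sets lebesgue"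
    unfolding S_def using fmeasurableD[OF lmeasurable_interval(1)] negligible_imp_sets[OF nD] by auto
  have cont: "continuous_on S (\<lambda>w. 1 / max (f w) c)"
  proof (rule continuous_at_imp_continuous_on, intro ballI)
    fix w assume "w \<in> S"
    then have "isCont f w" unfolding S_def D_def by auto
    then show "isCont (\<lambda>w. 1 / max (f w) c) w" using c by (intro continuous_intros) auto
  qed
  have meas: "(\<lambda>w. 1 / max (f w) c) \<in> borel_measurable (lebesgue_on S)"
    by (rule continuous_imp_measurable_on_sets_lebesgue[OF cont Sm])
  have ci: "(\<lambda>_. 1 / c) integrable_on {x0..z}" using has_integral_const_real by blast
  have ciS: "(\<lambda>_. 1 / c) integrable_on S"
    by (rule integrable_spike_set[OF ci]) (auto simp: S_def intro: negligible_subset[OF nD])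
  have "(\<lambda>w. 1 / max (f w) c) integrable_on S"
  proof (rule measurable_bounded_by_integrable_imp_integrable_real[OF meas ciS _ Sm])
    fix w assume "w \<in> S"
    show "\<bar>1 / max (f w) c\<bar> \<le> 1 / c" using c by (simp add: frac_le)
  qed
  then show i2: "(\<lambda>w. 1 / max (f w) c) integrable_on {x0..z}"
    by (rule integrable_spike_set) (auto simp: S_def intro: negligible_subset[OF nD])
  have eq: "hh f B w = 1 / max (f w) c" if "w \<in> {x0..z} - D" for w
  proof -
    have "isCont f w" using that by (auto simp: D_def)
    then have "f w \<ge> c" using cl that by auto
    then show ?thesis using \<open>isCont f w\<close> by (simp add: hh_def max_def)
  qed
  show "hh f B integrable_on {x0..z}"
    by (rule integrable_spike[OF i2 nD]) (use eq in auto)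
  fix v assume vz: "v \<le> z"
  show "integral {x0..v} (hh f B) = integral {x0..v} (\<lambda>w. 1 / max (f w) c)"
    by (rule integral_spike[OF nD]) (use eq vz in auto)
qed

lemma TT_split:
  assumes v: "v \<in> Gs f x0" and u: "x0 \<le> u" "u \<le> v"
  shows "TT f B x0 v = TT f B x0 u + integral {u..v} (hh f B)"
proof -
  obtain c where c: "c > 0" "\<forall>w\<in>{x0..v}. isCont f w \<longrightarrow> f w \<ge> c" using Gs_lb[OF v] by blast
  have i: "hh f B integrable_on {x0..v}" using hh_int(2)[OF v c] .
  have i1: "(hh f B has_integral TT f B x0 u) {x0..u}"
    unfolding TT_def using integrable_subinterval_real[OF i, of x0 u] u by (simp add: has_integral_integral)
  have i2: "(hh f B has_integral integral {u..v} (hh f B)) {u..v}"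
    using integrable_subinterval_real[OF i, of u v] u by (simp add: has_integral_integral)
  have "(hh f B has_integral (TT f B x0 u + integral {u..v} (hh f B))) {x0..v}"
    by (rule has_integral_combine[OF u i1 i2])
  then show ?thesis unfolding TT_def by (rule integral_unique)
qed

lemma TT_bounds:
  assumes v: "v \<in> Gs f x0" and u: "x0 \<le> u" "u \<le> v"
  shows "(v - u) / B \<le> TT f B x0 v - TT f B x0 u"
    "\<exists>M. \<forall>u' v'. x0 \<le> u' \<longrightarrow> u' \<le> v' \<longrightarrow> v' \<le> v \<longrightarrow> TT f B x0 v' - TT f B x0 u' \<le> M * (v' - u')"
proof -
  obtain c where c: "c > 0" "\<forall>w\<in>{x0..v}. isCont f w \<longrightarrow> f w \<ge> c" using Gs_lb[OF v] by blast
  have i: "hh f B integrable_on {x0..v}" using hh_int(2)[OF v c] .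
  have iuv: "(hh f B has_integral integral {u..v} (hh f B)) {u..v}"
    using integrable_subinterval_real[OF i, of u v] u by (simp add: has_integral_integral)
  have "(1 / B) * (v - u) \<le> integral {u..v} (hh f B)"
  proof (rule has_integral_le[OF _ iuv])
    show "((\<lambda>_. 1 / B) has_integral (1 / B) * (v - u)) {u..v}"
      using has_integral_const_real[of "1/B" u v] u by (simp add: mult.commute)
    show "\<And>w. w \<in> {u..v} \<Longrightarrow> 1 / B \<le> hh f B w" using hh_lb[OF v] u by auto
  qed
  then show "(v - u) / B \<le> TT f B x0 v - TT f B x0 u" using TT_split[OF v u] by simp
  show "\<exists>M. \<forall>u' v'. x0 \<le> u' \<longrightarrow> u' \<le> v' \<longrightarrow> v' \<le> v \<longrightarrow> TT f B x0 v' - TT f B x0 u' \<le> M * (v' - u')"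
  proof (intro exI[of _ "max (1 / c) (1 / B)"] allI impI)
    fix u' v' assume uv: "x0 \<le> u'" "u' \<le> v'" "v' \<le> v"
    have v': "v' \<in> Gs f x0" using Gs_down[OF v] uv by auto
    have i': "(hh f B has_integral integral {u'..v'} (hh f B)) {u'..v'}"
      using integrable_subinterval_real[OF i, of u' v'] uv by (simp add: has_integral_integral)
    have "integral {u'..v'} (hh f B) \<le> max (1 / c) (1 / B) * (v' - u')"
    proof (rule has_integral_le[OF i'])
      show "((\<lambda>_. max (1 / c) (1 / B)) has_integral max (1 / c) (1 / B) * (v' - u')) {u'..v'}"
        using has_integral_const_real[of "max (1 / c) (1 / B)" u' v'] uv by (simp add: mult.commute)
      show "\<And>w. w \<in> {u'..v'} \<Longrightarrow> hh f B w \<le> max (1 / c) (1 / B)"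
        using hh_ub[OF v c(1) c(2)] uv by auto
    qed
    then show "TT f B x0 v' - TT f B x0 u' \<le> max (1 / c) (1 / B) * (v' - u')"
      using TT_split[OF v' uv(1,2)] by simp
  qed
qed

lemma TT_x0: "TT f B x0 x0 = 0"
  unfolding TT_def by simp

lemma TT_strict: "v \<in> Gs f x0 \<Longrightarrow> x0 \<le> u \<Longrightarrow> u < v \<Longrightarrow> TT f B x0 u < TT f B x0 v"
proof -
  assume a: "v \<in> Gs f x0" "x0 \<le> u" "u < v"
  have "(v - u) / B \<le> TT f B x0 v - TT f B x0 u" using TT_bounds(1)[of v u] a by auto
  moreover have "(v - u) / B > 0" using a Bpos by simp
  ultimately show ?thesis by linarith
qed

lemma TT_mono: "v \<in> Gs f x0 \<Longrightarrow> x0 \<le> u \<Longrightarrow> u \<le> v \<Longrightarrow> TT f B x0 u \<le> TT f B x0 v"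
  using TT_strict[of v u] by (cases "u = v") auto

lemma TT_cont: "z \<in> Gs f x0 \<Longrightarrow> continuous_on {x0..z} (TT f B x0)"
proof -
  assume z: "z \<in> Gs f x0"
  obtain M where M: "\<And>u' v'. x0 \<le> u' \<Longrightarrow> u' \<le> v' \<Longrightarrow> v' \<le> z \<Longrightarrow> TT f B x0 v' - TT f B x0 u' \<le> M * (v' - u')"
    using TT_bounds(2)[OF z Gs_ge[OF z] order_refl] by blast
  show ?thesis
  proof (rule lip_cont[of _ _ M])
    fix a b assume ab: "a \<in> {x0..z}" "b \<in> {x0..z}"
    show "\<bar>TT f B x0 b - TT f B x0 a\<bar> \<le> M * \<bar>b - a\<bar>"
    proof (cases "a \<le> b")
      case True
      then have "TT f B x0 a \<le> TT f B x0 b" using TT_mono[OF Gs_down[OF z]] ab by auto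
      then show ?thesis using M[of a b] ab True by auto
    next
      case False
      then have "TT f B x0 b \<le> TT f B x0 a" using TT_mono[OF Gs_down[OF z]] ab by auto
      then show ?thesis using M[of b a] ab False by auto
    qed
  qed
qed

lemma TT_deriv:
  assumes z: "z \<in> Gs f x0" and w: "x0 < w" "w < z" and cw: "isCont f w"
  shows "(TT f B x0 has_real_derivative (1 / f w)) (at w)"
proof -
  obtain c where c: "c > 0" "\<forall>w\<in>{x0..z}. isCont f w \<longrightarrow> f w \<ge> c" using Gs_lb[OF z] by blast
  note hi = hh_int[OF z c]
  have fwc: "f w \<ge> c" using c(2) w cw by auto
  have mc: "max (f w) c > 0" using c by simp
  have ic1: "isCont (\<lambda>u. max (f u) c) w" by (intro continuous_intros cw)
  have ic: "isCont (\<lambda>u. 1 / max (f u) c) w"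
    by (rule isCont_divide[OF continuous_const ic1]) (use mc in simp)
  have ct: "continuous (at w within ({x0..z} - {})) (\<lambda>w. 1 / max (f w) c)"
    by (rule continuous_at_imp_continuous_within[OF ic])
  have wi: "w \<in> {x0..z} - {}" using w by simp
  have d: "((\<lambda>u. integral {x0..u} (\<lambda>w. 1 / max (f w) c)) has_vector_derivative (1 / max (f w) c))
      (at w within ({x0..z} - {}))"
    by (rule integral_has_vector_derivative_continuous_at[OF hi(1) wi finite.emptyI ct])
  have d2: "(TT f B x0 has_vector_derivative (1 / max (f w) c)) (at w within {x0..z})"
  proof (rule has_vector_derivative_transform_within[of _ _ _ _ 1])
    show "((\<lambda>u. integral {x0..u} (\<lambda>w. 1 / max (f w) c)) has_vector_derivative (1 / max (f w) c)) (at w within {x0..z})"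
      using d by simp
    show "w \<in> {x0..z}" using w by auto
    show "\<And>x'. x' \<in> {x0..z} \<Longrightarrow> dist x' w < 1 \<Longrightarrow> integral {x0..x'} (\<lambda>w. 1 / max (f w) c) = TT f B x0 x'"
    proof -
      fix x' assume "x' \<in> {x0..z}"
      then show "integral {x0..x'} (\<lambda>w. 1 / max (f w) c) = TT f B x0 x'"
        unfolding TT_def using hi(3)[of x'] by simp
    qed
  qed simp
  then have "(TT f B x0 has_vector_derivative (1 / max (f w) c)) (at w)"
    using at_within_Icc_at[OF w] by simp
  then show ?thesis using fwc by (simp add: has_real_derivative_iff_has_vector_derivative max_def)
qed


lemma TT_inj: "u \<in> Gs f x0 \<Longrightarrow> v \<in> Gs f x0 \<Longrightarrow> TT f B x0 u = TT f B x0 v \<Longrightarrow> u = v"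
proof (rule ccontr)
  assume a: "u \<in> Gs f x0" "v \<in> Gs f x0" "TT f B x0 u = TT f B x0 v" "u \<noteq> v"
  show False
  proof (cases "u < v")
    case True then show ?thesis using TT_strict[OF a(2) Gs_ge[OF a(1)]] a by simp
  next
    case False then have "v < u" using a by simp
    then show ?thesis using TT_strict[OF a(1) Gs_ge[OF a(2)]] a by simp
  qed
qed

lemma xs_TT: "w \<in> Gs f x0 \<Longrightarrow> xs f B x0 (TT f B x0 w) = w"
proof -
  assume w: "w \<in> Gs f x0"
  have "(THE z. z \<in> Gs f x0 \<and> TT f B x0 z = TT f B x0 w) = w"
    by (rule the_equality) (use w TT_inj in auto)
  then show ?thesis using w unfolding xs_def by auto
qed

lemma CV:
  assumes c: "x0 \<le> c" and sub: "\<And>w. x0 < w \<Longrightarrow> w < c \<Longrightarrow> w \<in> Gs f x0" and tau: "0 \<le> \<tau>"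
    and img: "\<And>w. x0 < w \<Longrightarrow> w < c \<Longrightarrow> 0 \<le> TT f B x0 w \<and> TT f B x0 w \<le> \<tau>"
    and surj: "\<And>s. 0 < s \<Longrightarrow> s < \<tau> \<Longrightarrow> \<exists>w. x0 < w \<and> w < c \<and> TT f B x0 w = s"
  shows "((\<lambda>s. f (xs f B x0 s)) has_integral (c - x0)) {0..\<tau>}"
proof -
  define D where "D = {y. \<not> isCont f y}"
  have nD: "negligible D" unfolding D_def by (rule negligible_disc[OF reg])
  have cD: "countable D" unfolding D_def by (rule reg_countable_disc[OF reg])
  define S where "S = {x0..c} - ({x0, c} \<union> D)"
  have Sm: "S \<in> sets lebesgue"
  proof -
    have "negligible ({x0, c} \<union> D)" using nD by auto
    then show ?thesis
      unfolding S_def by (rule sets.Diff[OF fmeasurableD[OF lmeasurable_interval(1)] negligible_imp_sets])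
  qed
  have Sp: "w \<in> S \<longleftrightarrow> x0 < w \<and> w < c \<and> isCont f w" for w
    unfolding S_def D_def by auto
  let ?T = "TT f B x0"
  have der: "(?T has_real_derivative (1 / f w)) (at w within S)" if w: "w \<in> S" for w
  proof -
    have w': "x0 < w" "w < c" "isCont f w" using w Sp by auto
    have z: "(w + c) / 2 \<in> Gs f x0" using sub w' by auto
    have "(?T has_real_derivative (1 / f w)) (at w)"
      by (rule TT_deriv[OF z]) (use w' in auto)
    then show ?thesis by (rule has_field_derivative_at_within)
  qed
  have inj: "inj_on ?T S"
  proof (rule inj_onI)
    fix u v assume "u \<in> S" "v \<in> S" "?T u = ?T v"
    then show "u = v" using TT_inj[of u v] sub Sp by auto
  qed
  have one: "\<bar>1 / f w\<bar> * f (xs f B x0 (?T w)) = 1" if w: "w \<in> S" for w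
  proof -
    have wG: "w \<in> Gs f x0" using w Sp sub by auto
    have "f w > 0" using Gs_cpos[OF wG, of w] w Sp Gs_ge[OF wG] by auto
    then show ?thesis using xs_TT[OF wG] by simp
  qed
  have h1: "((\<lambda>_. 1::real) has_integral (c - x0)) S"
  proof -
    have "((\<lambda>_. 1::real) has_integral (c - x0)) {x0..c}"
      using has_integral_const_real[of "1::real" x0 c] c by simp
    moreover have "{w \<in> S - {x0..c}. (1::real) \<noteq> 0} = {}" by (auto simp: S_def)
    then have "negligible {w \<in> S - {x0..c}. (1::real) \<noteq> 0}" by (simp only: negligible_empty)
    moreover have "negligible {w \<in> {x0..c} - S. (1::real) \<noteq> 0}"
      by (rule negligible_subset[of "{x0, c} \<union> D"]) (use nD in \<open>auto simp: S_def\<close>)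
    ultimately show ?thesis
      using has_integral_spike_set_eq[where f="\<lambda>_. 1::real" and S="{x0..c}" and T=S] by blast
  qed
  have "((\<lambda>w. \<bar>1 / f w\<bar> * f (xs f B x0 (?T w))) has_integral (c - x0)) S \<longleftrightarrow> ((\<lambda>_. 1::real) has_integral (c - x0)) S"
    by (rule has_integral_cong) (rule one)
  then have hF: "((\<lambda>w. \<bar>1 / f w\<bar> * f (xs f B x0 (?T w))) has_integral (c - x0)) S"
    using h1 by simp
  have absF: "(\<lambda>w. \<bar>1 / f w\<bar> * f (xs f B x0 (?T w))) absolutely_integrable_on S"
    by (rule nonnegative_absolutely_integrable_1[OF has_integral_integrable[OF hF]]) (use one in auto)
  have intF: "integral S (\<lambda>w. \<bar>1 / f w\<bar> * f (xs f B x0 (?T w))) = c - x0"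
    using hF by (rule integral_unique)
  have cv: "(\<lambda>s. f (xs f B x0 s)) absolutely_integrable_on ?T ` S \<and> integral (?T ` S) (\<lambda>s. f (xs f B x0 s)) = c - x0"
    using has_absolute_integral_change_of_variables_1'[OF Sm der inj, of "\<lambda>s. f (xs f B x0 s)" "c - x0"]
      absF intF by blast
  have hT: "((\<lambda>s. f (xs f B x0 s)) has_integral (c - x0)) (?T ` S)"
    using cv set_lebesgue_integral_eq_integral(1) has_integral_integral by metis
  have n1: "negligible {s \<in> ?T ` S - {0..\<tau>}. f (xs f B x0 s) \<noteq> 0}"
  proof -
    have "{s \<in> ?T ` S - {0..\<tau>}. f (xs f B x0 s) \<noteq> 0} = {}" using img Sp by auto
    then show ?thesis by (simp only: negligible_empty)
  qed
  have n2: "negligible {s \<in> {0..\<tau>} - ?T ` S. f (xs f B x0 s) \<noteq> 0}"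
  proof (rule negligible_subset[of "{0, \<tau>} \<union> ?T ` D"])
    show "negligible ({0, \<tau>} \<union> ?T ` D)"
      using countable_negligible[OF countable_image[OF cD]] by auto
    show "{s \<in> {0..\<tau>} - ?T ` S. f (xs f B x0 s) \<noteq> 0} \<subseteq> {0, \<tau>} \<union> ?T ` D"
    proof
      fix s assume s: "s \<in> {s \<in> {0..\<tau>} - ?T ` S. f (xs f B x0 s) \<noteq> 0}"
      show "s \<in> {0, \<tau>} \<union> ?T ` D"
      proof (cases "s = 0 \<or> s = \<tau>")
        case True then show ?thesis by auto
      next
        case False
        then have "0 < s" "s < \<tau>" using s by auto
        then obtain w where w: "x0 < w" "w < c" "?T w = s" using surj by blast
        have "w \<notin> S" using w s by auto
        then have "w \<in> D" using w Sp unfolding D_def by auto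
        then show ?thesis using w by auto
      qed
    qed
  qed
  show ?thesis using hT has_integral_spike_set_eq[OF n1 n2] by blast
qed

lemma f_b_zero:
  assumes a2: "A2 f" and b: "b > x0" and sub: "\<And>w. x0 < w \<Longrightarrow> w < b \<Longrightarrow> w \<in> Gs f x0"
    and nb: "b \<notin> Gs f x0"
  shows "f b = 0"
proof -
  have "\<exists>w. x0 < w \<and> w \<le> b \<and> badp f x0 w" using nb b unfolding Gs_def by auto
  then obtain w where w: "x0 < w" "w \<le> b" "badp f x0 w" by blast
  have "w = b"
  proof (rule ccontr)
    assume "w \<noteq> b"
    then have "w \<in> Gs f x0" using sub w by auto
    then show False using w unfolding Gs_def by auto
  qed
  then have bad: "f b = 0 \<or> left_lim f b \<le> 0 \<or> right_lim f b \<le> 0" using w unfolding badp_def by auto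
  have Lb: "left_lim f b \<ge> 0"
  proof (rule ccontr)
    assume "\<not> left_lim f b \<ge> 0"
    then have "left_lim f b < 0" by simp
    then have "eventually (\<lambda>v. f v < 0) (at_left b)" using order_tendstoD(2)[OF reg_lims(1)[OF reg]] by blast
    then obtain b' where b': "b' < b" "\<And>v. b' < v \<Longrightarrow> v < b \<Longrightarrow> f v < 0"
      unfolding eventually_at_left_field by blast
    define m where "m = max b' x0"
    define u where "u = (m + b) / 2"
    have mb: "m < b" using b' b by (simp add: m_def)
    have u: "m < u" "u < b" using mb by (auto simp: u_def)
    have uG: "u \<in> Gs f x0" using sub u by (auto simp: m_def)
    have "left_lim f u > 0" using Gs_good[OF uG] u by (auto simp: m_def)
    moreover have "left_lim f u \<le> 0"
    proof (rule tendsto_upperbound[OF reg_lims(1)[OF reg]])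
      show "\<forall>\<^sub>F v in at_left u. f v \<le> 0"
        unfolding eventually_at_left_field
        by (rule exI[of _ m]) (use u b' in \<open>auto simp: m_def intro: less_imp_le\<close>)
    qed simp
    ultimately show False by simp
  qed
  show ?thesis
  proof (cases "left_lim f b = 0")
    case True then show ?thesis using a2 unfolding A2_def by auto
  next
    case False
    then have Lp: "left_lim f b > 0" using Lb by simp
    show ?thesis
    proof (cases "right_lim f b > 0")
      case True then show ?thesis using bad Lp by auto
    next
      case False
      then have "right_lim f b = 0 \<or> right_lim f b < 0" by auto
      then show ?thesis using a2 Lp unfolding A2_def by auto
    qed
  qed
qed

lemma go_right:
  assumes a2: "A2 f"
  shows "caratheodory_solution_on f x0 {0..} (xs f B x0)"
  unfolding caratheodory_solution_on_def
proof
  fix t :: real assume "t \<in> {0..}"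
  then have t: "0 \<le> t" by simp
  let ?T = "TT f B x0"
  let ?x = "xs f B x0"
  have T0: "?T x0 = 0" by (rule TT_x0)
  show "((\<lambda>s. f (?x s)) has_integral (?x t - x0)) {0..t}"
  proof (cases "\<exists>z\<in>Gs f x0. ?T z = t")
    case True
    then obtain z where z: "z \<in> Gs f x0" "?T z = t" by blast
    have zx: "?x t = z" using xs_TT[OF z(1)] z(2) by simp
    have "((\<lambda>s. f (?x s)) has_integral (z - x0)) {0..t}"
    proof (rule CV[OF Gs_ge[OF z(1)] _ t])
      show "\<And>w. x0 < w \<Longrightarrow> w < z \<Longrightarrow> w \<in> Gs f x0" using Gs_down[OF z(1)] by auto
      show "\<And>w. x0 < w \<Longrightarrow> w < z \<Longrightarrow> 0 \<le> ?T w \<and> ?T w \<le> t"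
      proof -
        fix w assume w: "x0 < w" "w < z"
        have wG: "w \<in> Gs f x0" using Gs_down[OF z(1)] w by auto
        show "0 \<le> ?T w \<and> ?T w \<le> t"
          using TT_mono[OF wG, of x0] TT_mono[OF z(1), of w] w T0 z(2) by auto
      qed
      show "\<And>s. 0 < s \<Longrightarrow> s < t \<Longrightarrow> \<exists>w. x0 < w \<and> w < z \<and> ?T w = s"
      proof -
        fix s assume s: "0 < s" "s < t"
        obtain w where w: "x0 \<le> w" "w \<le> z" "?T w = s"
          using IVT'[of ?T x0 s z, OF _ _ Gs_ge[OF z(1)] TT_cont[OF z(1)]] T0 z(2) s by auto
        have "w \<noteq> x0" using w s T0 by auto
        moreover have "w \<noteq> z" using w s z(2) by auto
        ultimately show "\<exists>w. x0 < w \<and> w < z \<and> ?T w = s" using w by (intro exI[of _ w]) auto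
      qed
    qed
    then show ?thesis using zx by simp
  next
    case False
    have lt: "?T z < t" if z: "z \<in> Gs f x0" for z
    proof (rule ccontr)
      assume "\<not> ?T z < t"
      then obtain w where w: "x0 \<le> w" "w \<le> z" "?T w = t"
        using IVT'[of ?T x0 t z, OF _ _ Gs_ge[OF z] TT_cont[OF z]] T0 t by auto
      have "w \<in> Gs f x0" using Gs_down[OF z] w by auto
      then show False using False w by auto
    qed
    have zub: "z \<le> x0 + B * t" if z: "z \<in> Gs f x0" for z
    proof -
      have "(z - x0) / B \<le> ?T z - ?T x0" using TT_bounds(1)[OF z order_refl Gs_ge[OF z]] .
      then have "(z - x0) / B < t" using lt[OF z] T0 by simp
      then have "z - x0 < t * B" using pos_divide_less_eq[OF Bpos] by blast
      then show ?thesis by (simp add: mult.commute)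
    qed
    have ne: "Gs f x0 \<noteq> {}" using Gs_x0 by auto
    have bddG: "bdd_above (Gs f x0)" by (rule bdd_aboveI[of _ "x0 + B * t"]) (rule zub)
    define b where "b = Sup (Gs f x0)"
    have leb: "z \<le> b" if "z \<in> Gs f x0" for z using cSup_upper[OF that bddG] by (simp add: b_def)
    have nb: "b \<notin> Gs f x0"
    proof
      assume "b \<in> Gs f x0"
      then obtain z' where "z' > b" "z' \<in> Gs f x0" using Gs_ext by blast
      then show False using leb by force
    qed
    have sub: "w \<in> Gs f x0" if w: "x0 < w" "w < b" for w
    proof -
      have "w < Sup (Gs f x0)" using w(2) by (simp add: b_def)
      then obtain z where "z \<in> Gs f x0" "w < z" using less_cSup_iff[OF ne bddG] by blast
      then show ?thesis using Gs_down[of z w] w by auto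
    qed
    have bx0: "b > x0"
    proof -
      obtain z' where "z' > x0" "z' \<in> Gs f x0" using Gs_ext[OF Gs_x0] by blast
      then show ?thesis using leb by force
    qed
    have fb: "f b = 0" by (rule f_b_zero[OF a2 bx0 sub nb])
    have xb: "?x s = b" if "\<not> (\<exists>z\<in>Gs f x0. ?T z = s)" for s
      using that unfolding xs_def b_def by (simp only: if_False)
    have neT: "?T ` Gs f x0 \<noteq> {}" using ne by auto
    have bddT: "bdd_above (?T ` Gs f x0)"
    proof (rule bdd_aboveI[of _ t])
      fix y assume "y \<in> ?T ` Gs f x0"
      then obtain z where "z \<in> Gs f x0" "y = ?T z" by blast
      then show "y \<le> t" using lt[of z] by simp
    qed
    define \<tau> where "\<tau> = Sup (?T ` Gs f x0)"
    have leT: "?T z \<le> \<tau>" if "z \<in> Gs f x0" for z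
      using cSup_upper[OF _ bddT] that by (simp add: \<tau>_def)
    have ltT: "?T z < \<tau>" if z: "z \<in> Gs f x0" for z
    proof -
      obtain z' where z': "z' > z" "z' \<in> Gs f x0" using Gs_ext[OF z] by blast
      have "?T z < ?T z'" using TT_strict[OF z'(2) Gs_ge[OF z] z'(1)] .
      then show ?thesis using leT[OF z'(2)] by simp
    qed
    have tau_t: "\<tau> \<le> t" unfolding \<tau>_def
    proof (rule cSup_least[OF neT])
      fix y assume "y \<in> ?T ` Gs f x0"
      then obtain z where "z \<in> Gs f x0" "y = ?T z" by blast
      then show "y \<le> t" using lt[of z] by simp
    qed
    have tau0: "0 \<le> \<tau>" using leT[OF Gs_x0] T0 by simp
    have int1: "((\<lambda>s. f (?x s)) has_integral (b - x0)) {0..\<tau>}"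
    proof (rule CV[OF _ sub tau0])
      show "x0 \<le> b" using bx0 by simp
      show "\<And>w. x0 < w \<Longrightarrow> w < b \<Longrightarrow> 0 \<le> ?T w \<and> ?T w \<le> \<tau>"
      proof -
        fix w assume w: "x0 < w" "w < b"
        have wG: "w \<in> Gs f x0" using sub w by auto
        show "0 \<le> ?T w \<and> ?T w \<le> \<tau>" using TT_mono[OF wG, of x0] w T0 leT[OF wG] by auto
      qed
      show "\<And>s. 0 < s \<Longrightarrow> s < \<tau> \<Longrightarrow> \<exists>w. x0 < w \<and> w < b \<and> ?T w = s"
      proof -
        fix s assume s: "0 < s" "s < \<tau>"
        obtain z where z: "z \<in> Gs f x0" "s < ?T z"
          using s(2) less_cSup_iff[OF neT bddT] unfolding \<tau>_def by auto
        obtain w where w: "x0 \<le> w" "w \<le> z" "?T w = s"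
          using IVT'[of ?T x0 s z, OF _ _ Gs_ge[OF z(1)] TT_cont[OF z(1)]] T0 z s by auto
        have "z \<noteq> b" using nb z(1) by auto
        then have zb: "z < b" using leb[OF z(1)] by simp
        have "w \<noteq> x0" using w s T0 by auto
        moreover have "w \<noteq> z" using w z by auto
        ultimately show "\<exists>w. x0 < w \<and> w < b \<and> ?T w = s" using w zb by (intro exI[of _ w]) auto
      qed
    qed
    have int2: "((\<lambda>s. f (?x s)) has_integral 0) {\<tau>..t}"
    proof -
      have "f (?x s) = 0" if s: "s \<in> {\<tau>..t}" for s
      proof -
        have "\<not> (\<exists>z\<in>Gs f x0. ?T z = s)" using ltT s by force
        then show ?thesis using xb fb by simp
      qed
      then have "((\<lambda>s. f (?x s)) has_integral 0) {\<tau>..t} \<longleftrightarrow> ((\<lambda>_. 0::real) has_integral 0) {\<tau>..t}"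
        by (intro has_integral_cong) simp
      then show ?thesis using has_integral_0[of "{\<tau>..t}"] by simp
    qed
    have "((\<lambda>s. f (?x s)) has_integral (b - x0 + 0)) {0..t}"
      by (rule has_integral_combine[OF tau0 tau_t int1 int2])
    moreover have "?x t = b" using xb False by simp
    ultimately show ?thesis by simp
  qed
qed

end

lemma refl_left:
  fixes f :: "real \<Rightarrow> real"
  assumes "(f \<longlongrightarrow> l) (at_right (- y))"
  shows "((\<lambda>z. - f (- z)) \<longlongrightarrow> - l) (at_left y)"
proof -
  have "((\<lambda>x. - f x) \<longlongrightarrow> - l) (at_right (- y))" using tendsto_minus[OF assms] .
  then have "((\<lambda>x. - f (- (- x))) \<longlongrightarrow> - l) (at_right (- y))" by simp
  then show ?thesis unfolding at_left_minus[of y] filterlim_filtermap .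
qed

lemma refl_right:
  fixes f :: "real \<Rightarrow> real"
  assumes "(f \<longlongrightarrow> l) (at_left (- y))"
  shows "((\<lambda>z. - f (- z)) \<longlongrightarrow> - l) (at_right y)"
proof -
  have "((\<lambda>x. - f x) \<longlongrightarrow> - l) (at_left (- y))" using tendsto_minus[OF assms] .
  then have "((\<lambda>x. - f (- (- x))) \<longlongrightarrow> - l) (at_left (- y))" by simp
  then show ?thesis unfolding at_right_minus[of y] filterlim_filtermap .
qed

lemma refl_reg:
  fixes f :: "real \<Rightarrow> real"
  assumes reg: "regulated f"
  shows "regulated (\<lambda>z. - f (- z))"
    "left_lim (\<lambda>z. - f (- z)) y = - right_lim f (- y)"
    "right_lim (\<lambda>z. - f (- z)) y = - left_lim f (- y)"
proof -
  have l: "((\<lambda>z. - f (- z)) \<longlongrightarrow> - right_lim f (- y')) (at_left y')" for y'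
    by (rule refl_left[OF reg_lims(2)[OF reg]])
  have r: "((\<lambda>z. - f (- z)) \<longlongrightarrow> - left_lim f (- y')) (at_right y')" for y'
    by (rule refl_right[OF reg_lims(1)[OF reg]])
  show "regulated (\<lambda>z. - f (- z))" unfolding regulated_def using l r by blast
  show "left_lim (\<lambda>z. - f (- z)) y = - right_lim f (- y)"
    unfolding left_lim_def by (rule tendsto_Lim[OF _ l]) simp
  show "right_lim (\<lambda>z. - f (- z)) y = - left_lim f (- y)"
    unfolding right_lim_def by (rule tendsto_Lim[OF _ r]) simp
qed

lemma refl_A2:
  fixes f :: "real \<Rightarrow> real"
  assumes reg: "regulated f" and a2: "A2 f"
  shows "A2 (\<lambda>z. - f (- z))"
  unfolding A2_def
proof (intro allI impI)
  fix y
  assume h: "left_lim (\<lambda>z. - f (- z)) y * right_lim (\<lambda>z. - f (- z)) y = 0 \<or>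
         0 < left_lim (\<lambda>z. - f (- z)) y \<and> 0 > right_lim (\<lambda>z. - f (- z)) y"
  then have "(- right_lim f (- y)) * (- left_lim f (- y)) = 0 \<or> (0 < - right_lim f (- y) \<and> 0 > - left_lim f (- y))"
    unfolding refl_reg(2,3)[OF reg] .
  then have "left_lim f (- y) * right_lim f (- y) = 0 \<or> (left_lim f (- y) > 0 \<and> 0 > right_lim f (- y))"
    by (simp add: mult.commute) linarith
  then have "f (- y) = 0" using a2 unfolding A2_def by blast
  then show "- f (- y) = 0" by simp
qed

lemma refl_sol:
  assumes "caratheodory_solution_on (\<lambda>z. - f (- z)) (- x0) I y"
  shows "caratheodory_solution_on f x0 I (\<lambda>t. - y t)"
  unfolding caratheodory_solution_on_def
proof
  fix t assume "t \<in> I"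
  then have "((\<lambda>s. - f (- y s)) has_integral (y t - - x0)) {0..t}"
    using assms unfolding caratheodory_solution_on_def by auto
  then have "((\<lambda>s. - (- f (- y s))) has_integral - (y t - - x0)) {0..t}"
    by (rule has_integral_neg)
  then show "((\<lambda>s. f (- y s)) has_integral (- y t - x0)) {0..t}" by simp
qed

lemma existence:
  assumes a1: "A1 f" and a2: "A2 f"
  shows "\<exists>x. caratheodory_solution_on f x0 {0..} x"
proof -
  have reg: "regulated f" using A1_reg[OF a1] .
  obtain B0 where B0: "\<And>z. \<bar>f z\<bar> \<le> B0" using A1_bound[OF a1] by blast
  define B where "B = \<bar>B0\<bar> + 1"
  have Bpos: "B > 0" by (simp add: B_def)
  have Bnd: "\<bar>f z\<bar> \<le> B" for z using B0[of z] abs_ge_self[of B0] unfolding B_def by linarith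
  show ?thesis
  proof (cases "f x0 = 0")
    case True
    have "caratheodory_solution_on f x0 {0..} (\<lambda>_. x0)"
      unfolding caratheodory_solution_on_def using True by simp
    then show ?thesis by blast
  next
    case fx0: False
    show ?thesis
    proof (cases "right_lim f x0 > 0")
      case True
      show ?thesis using go_right[OF reg Bpos Bnd True a2] by blast
    next
      case False
      have nz: "\<not> (left_lim f x0 * right_lim f x0 = 0 \<or> (left_lim f x0 > 0 \<and> 0 > right_lim f x0))"
        using a2 fx0 unfolding A2_def by blast
      then have Ln: "left_lim f x0 \<noteq> 0" and Rn: "right_lim f x0 \<noteq> 0" by auto
      then have "right_lim f x0 < 0" using False by simp
      then have "\<not> left_lim f x0 > 0" using nz by blast
      then have "left_lim f x0 < 0" using Ln by simp
      then have R': "right_lim (\<lambda>z. - f (- z)) (- x0) > 0" using refl_reg(3)[OF reg, of "- x0"] by simp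
      have reg': "regulated (\<lambda>z. - f (- z))" using refl_reg(1)[OF reg] .
      have Bnd': "\<And>z. \<bar>- f (- z)\<bar> \<le> B" using Bnd by simp
      have "caratheodory_solution_on (\<lambda>z. - f (- z)) (- x0) {0..} (xs (\<lambda>z. - f (- z)) B (- x0))"
        by (rule go_right[OF reg' Bpos Bnd' R' refl_A2[OF reg a2]])
      then show ?thesis using refl_sol by blast
    qed
  qed
qed

theorem theorem2p1:
  fixes f :: "real \<Rightarrow> real"
  assumes "A1 f" and "A2 f"
  shows "(\<forall>x0. \<exists>x. caratheodory_solution_on f x0 {0..} x)
    \<and> (\<forall>x0 x. caratheodory_solution_on f x0 {0..} x
          \<longrightarrow> mono_on {0..} x \<or> antimono_on {0..} x)
    \<and> (\<forall>x0 \<tau> x. \<tau> \<ge> 0 \<longrightarrow> caratheodory_solution_on f x0 {0..\<tau>} x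
          \<longrightarrow> mono_on {0..\<tau>} x \<or> antimono_on {0..\<tau>} x)
    \<and> (\<forall>x0. (\<exists>x. caratheodory_solution_on f x0 {0..} x) \<and>
          (\<forall>(F :: 'i filter) X x. F \<noteq> bot
             \<longrightarrow> (\<forall>\<^sub>F i in F. caratheodory_solution_on f x0 {0..} (X i))
             \<longrightarrow> (\<forall>T\<ge>0. uniform_limit {0..T} X x F)
             \<longrightarrow> caratheodory_solution_on f x0 {0..} x))"
proof (intro conjI allI impI)
  fix x0 show "\<exists>x. caratheodory_solution_on f x0 {0..} x" by (rule existence[OF assms])
next
  fix x0 x assume "caratheodory_solution_on f x0 {0..} x"
  then show "mono_on {0..} x \<or> antimono_on {0..} x"
    using sol_mono[OF assms _ tset_simps(1)] by blast
next
  fix x0 x and \<tau> :: real assume "\<tau> \<ge> 0" "caratheodory_solution_on f x0 {0..\<tau>} x"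
  then show "mono_on {0..\<tau>} x \<or> antimono_on {0..\<tau>} x"
    using sol_mono[OF assms _ tset_simps(2)] by blast
next
  fix x0 show "\<exists>x. caratheodory_solution_on f x0 {0..} x" by (rule existence[OF assms])
next
  fix x0 and F :: "'i filter" and X x
  assume "F \<noteq> bot" "\<forall>\<^sub>F i in F. caratheodory_solution_on f x0 {0..} (X i)"
    "\<forall>T\<ge>0. uniform_limit {0..T} X x F"
  then show "caratheodory_solution_on f x0 {0..} x" by (rule closed_sol[OF assms])
qed

end
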